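(* In Smoluchowski's discrete model (defined in the context), let $\tau$ be a gelation stopping time. Then, conditionally on $\tau$ and $S(\tau)$ (on $\{\tau<\infty\}$), the configuration in solution $C(\tau)$ is distributed as an Erdős–Rényi graph on vertex set $S(\tau)$ with edge probability $p^{(N)}_\tau$, conditioned on having no connected component with at least $\alpha(N)$ vertices.
   Context: Smoluchowski's discrete model: $N\ge2$, $(\alpha(N))$ with $\alpha(N)\to\infty$, $\alpha(N)/N\to0$. Particles $[N]$; each unordered pair $\{i,j\}$ has an independent exponential clock $e_{ij}$ of parameter $1/N$; initially no links. When $e_{ij}$ rings, the link is created unless $i$ or $j$ belongs at that moment to a cluster (connected component of created links) of size $\ge\alpha(N)$, in which case it is never created. $S(t)$ is the set of particles in clusters of size $<\alpha(N)$ at time $t$; $C(t)$ is the graph on $S(t)$ with edges $\{i,j\}\subset S(t)$, $e_{ij}\le t$; $p^{(N)}_t=1-e^{-t/N}$. Filtrations: $\mathcal{F}_t=\sigma(e_{ij}\mathbf 1_{e_{ij}\le t}, i,j\in[N])$ and, for $S\subset[N]$, $\mathcal{F}^S_t=\sigma(e_{ij}\mathbf 1_{e_{ij}\le t}, i,j\in S)$. A gelation stopping time is an $(\mathcal{F}_t)$-stopping time $\tau$ such that for every $S\subset[N]$ and $t\ge0$, conditionally on $\{S(t)=S\}$, $\tau\mathbf 1_{\tau\le t}$ is independent of $\mathcal{F}^S_t$. (Example: the successive times $\tau_k$ at which a cluster of size $\ge\alpha(N)$ is formed.) *)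

theory Defs
  imports "HOL-Probability.Probability"
begin

(* Particles are 0,...,N-1; an unordered pair {i,j} is represented as (i,j) with i < j. *)
definition Pairs :: "nat \<Rightarrow> (nat \<times> nat) set" where
  "Pairs N = {(i,j). i < j \<and> j < N}"

definition Pairs_on :: "nat set \<Rightarrow> (nat \<times> nat) set" where
  "Pairs_on S = {(i,j). i < j \<and> i \<in> S \<and> j \<in> S}"

definition clock_space :: "nat \<Rightarrow> (nat \<times> nat \<Rightarrow> real) measure" where
  "clock_space N = PiM (Pairs N) (\<lambda>_. density lborel (exponential_density (1 / real N)))"

definition cluster :: "(nat \<times> nat) set \<Rightarrow> nat \<Rightarrow> nat set" where
  "cluster E v = {w. (v, w) \<in> (E \<union> E\<inverse>)\<^sup>*}"

(* order in which clocks ring (ties, a null event, broken lexicographically) *)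
definition prec :: "(nat \<times> nat \<Rightarrow> real) \<Rightarrow> nat \<times> nat \<Rightarrow> nat \<times> nat \<Rightarrow> bool" where
  "prec \<omega> f e \<longleftrightarrow> \<omega> f < \<omega> e \<or>
      (\<omega> f = \<omega> e \<and> (fst f < fst e \<or> (fst f = fst e \<and> snd f < snd e)))"

definition created :: "nat \<Rightarrow> real \<Rightarrow> (nat \<times> nat \<Rightarrow> real) \<Rightarrow> (nat \<times> nat) set" where
  "created N a \<omega> = (THE A. A \<subseteq> Pairs N \<and>
      (\<forall>e\<in>Pairs N. e \<in> A \<longleftrightarrow>
         (\<forall>v\<in>{fst e, snd e}. real (card (cluster {f\<in>A. prec \<omega> f e} v)) < a)))"

definition links :: "nat \<Rightarrow> real \<Rightarrow> (nat \<times> nat \<Rightarrow> real) \<Rightarrow> real \<Rightarrow> (nat \<times> nat) set" where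
  "links N a \<omega> t = {e \<in> created N a \<omega>. \<omega> e \<le> t}"

definition Ssol :: "nat \<Rightarrow> real \<Rightarrow> (nat \<times> nat \<Rightarrow> real) \<Rightarrow> real \<Rightarrow> nat set" where
  "Ssol N a \<omega> t = {v. v < N \<and> real (card (cluster (links N a \<omega> t) v)) < a}"

definition Csol :: "nat \<Rightarrow> real \<Rightarrow> (nat \<times> nat \<Rightarrow> real) \<Rightarrow> real \<Rightarrow> (nat \<times> nat) set" where
  "Csol N a \<omega> t = {e \<in> Pairs_on (Ssol N a \<omega> t). \<omega> e \<le> t}"

definition pN :: "nat \<Rightarrow> real \<Rightarrow> real" where
  "pN N t = 1 - exp (- t / real N)"

definition filt :: "nat \<Rightarrow> (nat \<times> nat) set \<Rightarrow> real \<Rightarrow> (nat \<times> nat \<Rightarrow> real) set set" where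
  "filt N P t = sigma_sets (space (clock_space N))
     (\<Union>e\<in>P. {(\<lambda>\<omega>. if \<omega> e \<le> t then \<omega> e else 0) -` B \<inter> space (clock_space N) | B. B \<in> sets borel})"

definition F :: "nat \<Rightarrow> real \<Rightarrow> (nat \<times> nat \<Rightarrow> real) set set" where
  "F N t = filt N (Pairs N) t"

definition FS :: "nat \<Rightarrow> nat set \<Rightarrow> real \<Rightarrow> (nat \<times> nat \<Rightarrow> real) set set" where
  "FS N S t = filt N (Pairs_on S) t"

definition gelation_stopping_time ::
  "nat \<Rightarrow> real \<Rightarrow> ((nat \<times> nat \<Rightarrow> real) \<Rightarrow> ennreal) \<Rightarrow> bool" where
  "gelation_stopping_time N a \<tau> \<longleftrightarrow>
     (\<forall>t\<ge>0. {\<omega> \<in> space (clock_space N). \<tau> \<omega> \<le> ennreal t} \<in> F N t) \<and>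
     (\<forall>S. S \<subseteq> {..<N} \<longrightarrow> (\<forall>t\<ge>0. \<forall>A \<in> sets (borel :: ennreal measure). \<forall>B \<in> FS N S t.
        (let E = {\<omega> \<in> space (clock_space N). Ssol N a \<omega> t = S};
             X = {\<omega> \<in> space (clock_space N). (if \<tau> \<omega> \<le> ennreal t then \<tau> \<omega> else 0) \<in> A}
         in measure (clock_space N) (X \<inter> B \<inter> E) * measure (clock_space N) E
            = measure (clock_space N) (X \<inter> E) * measure (clock_space N) (B \<inter> E))))"

definition no_big :: "real \<Rightarrow> nat set \<Rightarrow> (nat \<times> nat) set \<Rightarrow> bool" where
  "no_big a S G \<longleftrightarrow> (\<forall>v\<in>S. real (card (cluster G v)) < a)"

definition er_weight :: "nat set \<Rightarrow> real \<Rightarrow> (nat \<times> nat) set \<Rightarrow> real" where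
  "er_weight S p G = p ^ card G * (1 - p) ^ (card (Pairs_on S) - card G)"

definition ER_cond :: "real \<Rightarrow> nat set \<Rightarrow> real \<Rightarrow> (nat \<times> nat) set \<Rightarrow> real" where
  "ER_cond a S p G =
     (if G \<subseteq> Pairs_on S \<and> no_big a S G
      then er_weight S p G / (\<Sum>H\<in>{H. H \<subseteq> Pairs_on S \<and> no_big a S H}. er_weight S p H)
      else 0)"

end

theory Submission
  imports Defs
begin

section \<open>Clusters\<close>

lemma cluster_self: "v \<in> cluster E v"
  by (simp add: cluster_def)

lemma cluster_subset: "cluster E v \<subseteq> insert v (fst ` E \<union> snd ` E)"
proof
  fix w assume "w \<in> cluster E v"
  then have "(v, w) \<in> (E \<union> E\<inverse>)\<^sup>*" by (simp add: cluster_def)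
  then show "w \<in> insert v (fst ` E \<union> snd ` E)"
    by (induction rule: rtrancl_induct) (force simp: image_iff)+
qed

lemma finite_cluster: "finite E \<Longrightarrow> finite (cluster E v)"
  using cluster_subset[of E v] by (meson finite_Un finite_imageI finite_insert finite_subset)

lemma cluster_mono: "E \<subseteq> E' \<Longrightarrow> cluster E v \<subseteq> cluster E' v"
  unfolding cluster_def by (auto intro: rtrancl_mono[THEN subsetD, rotated])

lemma card_cluster_mono: "E \<subseteq> E' \<Longrightarrow> finite E' \<Longrightarrow> card (cluster E v) \<le> card (cluster E' v)"
  by (intro card_mono finite_cluster cluster_mono)

lemma cluster_edge: assumes "(u, w) \<in> E" shows "cluster E u = cluster E w"
proof -
  have uw: "(u, w) \<in> (E \<union> E\<inverse>)\<^sup>*" "(w, u) \<in> (E \<union> E\<inverse>)\<^sup>*" using assms by auto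
  show ?thesis unfolding cluster_def
    using uw by (auto intro: rtrancl_trans)
qed

lemma cluster_sep_aux:
  assumes E: "\<forall>f\<in>E. fst f \<in> S \<longleftrightarrow> snd f \<in> S"
    and EE: "{f\<in>E. fst f \<in> S \<longleftrightarrow> v \<in> S} \<subseteq> E'"
    and "(v, w) \<in> (E \<union> E\<inverse>)\<^sup>*"
  shows "(w \<in> S \<longleftrightarrow> v \<in> S) \<and> (v, w) \<in> (E' \<union> E'\<inverse>)\<^sup>*"
  using assms(3)
proof (induction rule: rtrancl_induct)
  case base then show ?case by simp
next
  case (step y z)
  from step.hyps(2) show ?case
  proof
    assume yz: "(y, z) \<in> E"
    then have "z \<in> S \<longleftrightarrow> v \<in> S" using E step.IH by fastforce
    moreover have "(y, z) \<in> E'" using EE yz step.IH by auto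
    ultimately show ?thesis using step.IH by (meson UnI1 rtrancl.simps)
  next
    assume zy: "(y, z) \<in> E\<inverse>"
    then have zy': "(z, y) \<in> E" by simp
    then have "z \<in> S \<longleftrightarrow> v \<in> S" using E step.IH by fastforce
    moreover have "(z, y) \<in> E'" using EE zy' step.IH E by fastforce
    ultimately show ?thesis using step.IH by (meson UnI2 converseI rtrancl.simps)
  qed
qed

lemma cluster_sep:
  assumes E: "\<forall>f\<in>E. fst f \<in> S \<longleftrightarrow> snd f \<in> S"
    and E': "\<forall>f\<in>E'. fst f \<in> S \<longleftrightarrow> snd f \<in> S"
    and EE: "{f\<in>E. fst f \<in> S \<longleftrightarrow> v \<in> S} = {f\<in>E'. fst f \<in> S \<longleftrightarrow> v \<in> S}"
  shows "cluster E v = cluster E' v"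
proof -
  have 1: "{f\<in>E. fst f \<in> S \<longleftrightarrow> v \<in> S} \<subseteq> E'" using EE by blast
  have 2: "{f\<in>E'. fst f \<in> S \<longleftrightarrow> v \<in> S} \<subseteq> E" using EE by blast
  show ?thesis unfolding cluster_def
    using cluster_sep_aux[OF E 1] cluster_sep_aux[OF E' 2] by blast
qed

section \<open>The order prec\<close>

lemma prec_irrefl: "\<not> prec \<omega> e e"
  by (simp add: prec_def)

lemma prec_asym: "prec \<omega> f e \<Longrightarrow> \<not> prec \<omega> e f"
  by (auto simp: prec_def)

lemma prec_trans: "prec \<omega> f e \<Longrightarrow> prec \<omega> e g \<Longrightarrow> prec \<omega> f g"
  by (auto simp: prec_def)

lemma prec_total: "f \<noteq> e \<Longrightarrow> prec \<omega> f e \<or> prec \<omega> e f"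
  by (cases f; cases e) (auto simp: prec_def)

lemma prec_le: "prec \<omega> f e \<Longrightarrow> \<omega> f \<le> \<omega> e"
  by (auto simp: prec_def)

lemma finite_Pairs: "finite (Pairs N)"
  by (rule finite_subset[of _ "{..<N} \<times> {..<N}"]) (auto simp: Pairs_def)

definition rank :: "nat \<Rightarrow> (nat \<times> nat \<Rightarrow> real) \<Rightarrow> nat \<times> nat \<Rightarrow> nat" where
  "rank N \<omega> e = card {f \<in> Pairs N. prec \<omega> f e}"

lemma rank_less:
  assumes "prec \<omega> f e" "f \<in> Pairs N"
  shows "rank N \<omega> f < rank N \<omega> e"
  unfolding rank_def
proof (rule psubset_card_mono)
  show "finite {f \<in> Pairs N. prec \<omega> f e}" using finite_Pairs by auto
  show "{g \<in> Pairs N. prec \<omega> g f} \<subset> {f \<in> Pairs N. prec \<omega> f e}"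
    using assms prec_trans prec_irrefl by blast
qed

lemma rank_lt_card: "rank N \<omega> e < card (Pairs N)" if "e \<in> Pairs N"
proof -
  have "{f \<in> Pairs N. prec \<omega> f e} \<subset> Pairs N"
    using that prec_irrefl[of \<omega> e] by blast
  then show ?thesis unfolding rank_def using finite_Pairs by (rule psubset_card_mono[rotated])
qed

lemma rank_inj: "e \<in> Pairs N \<Longrightarrow> f \<in> Pairs N \<Longrightarrow> rank N \<omega> e = rank N \<omega> f \<Longrightarrow> e = f"
  using prec_total rank_less by (metis less_irrefl)

section \<open>The created set\<close>

definition ccond :: "real \<Rightarrow> (nat \<times> nat \<Rightarrow> real) \<Rightarrow> (nat \<times> nat) set \<Rightarrow> nat \<times> nat \<Rightarrow> bool" where
  "ccond a \<omega> A e \<longleftrightarrow> (\<forall>v\<in>{fst e, snd e}. real (card (cluster {f\<in>A. prec \<omega> f e} v)) < a)"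

definition isCr :: "nat \<Rightarrow> real \<Rightarrow> (nat \<times> nat \<Rightarrow> real) \<Rightarrow> (nat \<times> nat) set \<Rightarrow> bool" where
  "isCr N a \<omega> A \<longleftrightarrow> A \<subseteq> Pairs N \<and> (\<forall>e\<in>Pairs N. e \<in> A \<longleftrightarrow> ccond a \<omega> A e)"

lemma ccond_cong:
  assumes "{f\<in>A. prec \<omega> f e} = {f\<in>B. prec \<omega>' f e}"
  shows "ccond a \<omega> A e = ccond a \<omega>' B e"
  using assms by (simp add: ccond_def)

lemma isCr_unique:
  assumes A: "isCr N a \<omega> A" and B: "isCr N a \<omega> B"
  shows "A = B"
proof -
  have "\<forall>e\<in>Pairs N. rank N \<omega> e = n \<longrightarrow> (e \<in> A \<longleftrightarrow> e \<in> B)" for n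
  proof (induction n rule: less_induct)
    case (less n)
    show ?case
    proof (intro ballI impI)
      fix e assume e: "e \<in> Pairs N" "rank N \<omega> e = n"
      have "{f\<in>A. prec \<omega> f e} = {f\<in>B. prec \<omega> f e}"
      proof -
        have "f \<in> A \<longleftrightarrow> f \<in> B" if "prec \<omega> f e" "f \<in> Pairs N" for f
        proof -
          have "rank N \<omega> f < n" using rank_less[OF that] e(2) by simp
          then show ?thesis using less.IH that(2) by blast
        qed
        moreover have "A \<subseteq> Pairs N" "B \<subseteq> Pairs N" using A B by (simp_all add: isCr_def)
      ultimately show ?thesis by blast
      qed
      then have "ccond a \<omega> A e = ccond a \<omega> B e" by (rule ccond_cong)
      moreover have "e \<in> A \<longleftrightarrow> ccond a \<omega> A e" "e \<in> B \<longleftrightarrow> ccond a \<omega> B e"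
        using A B e(1) by (simp_all add: isCr_def)
      ultimately show "e \<in> A \<longleftrightarrow> e \<in> B" by simp
    qed
  qed
  moreover have "A \<subseteq> Pairs N" "B \<subseteq> Pairs N" using A B by (simp_all add: isCr_def)
  ultimately show ?thesis by blast
qed

lemma isCr_exists_aux:
  "\<exists>A\<subseteq>Pairs N. (\<forall>e\<in>A. rank N \<omega> e < n) \<and>
     (\<forall>e\<in>Pairs N. rank N \<omega> e < n \<longrightarrow> (e \<in> A \<longleftrightarrow> ccond a \<omega> A e))"
proof (induction n)
  case 0 then show ?case by auto
next
  case (Suc n)
  then obtain A where A: "A \<subseteq> Pairs N" "\<forall>e\<in>A. rank N \<omega> e < n"
    "\<forall>e\<in>Pairs N. rank N \<omega> e < n \<longrightarrow> (e \<in> A \<longleftrightarrow> ccond a \<omega> A e)" by blast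
  define A' where "A' = A \<union> {e\<in>Pairs N. rank N \<omega> e = n \<and> ccond a \<omega> A e}"
  have eq: "{f\<in>A'. prec \<omega> f e} = {f\<in>A. prec \<omega> f e}" if "rank N \<omega> e < Suc n" for e
  proof -
    have "f \<in> A" if "f \<in> A'" "prec \<omega> f e" for f
      using that \<open>rank N \<omega> e < Suc n\<close> rank_less[of \<omega> f e N] unfolding A'_def by auto
    then show ?thesis unfolding A'_def by blast
  qed
  show ?case
  proof (intro exI[of _ A'] conjI ballI impI)
    show "A' \<subseteq> Pairs N" using A unfolding A'_def by auto
    show "rank N \<omega> e < Suc n" if "e \<in> A'" for e using that A unfolding A'_def by auto
    fix e assume e: "e \<in> Pairs N" "rank N \<omega> e < Suc n"
    have c: "ccond a \<omega> A' e = ccond a \<omega> A e" using eq[OF e(2)] by (rule ccond_cong)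
    show "e \<in> A' \<longleftrightarrow> ccond a \<omega> A' e"
    proof (cases "rank N \<omega> e < n")
      case True
      have "e \<in> A' \<longleftrightarrow> e \<in> A" using True unfolding A'_def by auto
      then show ?thesis using A(3)[rule_format, OF e(1) True] c by simp
    next
      case False then have r: "rank N \<omega> e = n" using e by simp
      have "e \<notin> A" using A(2) r by auto
      then have "e \<in> A' \<longleftrightarrow> ccond a \<omega> A e" using r e(1) unfolding A'_def by auto
      then show ?thesis using c by simp
    qed
  qed
qed

lemma isCr_exists: "\<exists>A. isCr N a \<omega> A"
proof -
  obtain A where "A \<subseteq> Pairs N"
     "\<forall>e\<in>Pairs N. rank N \<omega> e < card (Pairs N) \<longrightarrow> (e \<in> A \<longleftrightarrow> ccond a \<omega> A e)"
    using isCr_exists_aux[of N \<omega> "card (Pairs N)" a] by blast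
  note A = this
  have "isCr N a \<omega> A" unfolding isCr_def
  proof (intro conjI ballI)
    show "A \<subseteq> Pairs N" by (rule A(1))
    fix e assume "e \<in> Pairs N"
    then show "e \<in> A \<longleftrightarrow> ccond a \<omega> A e" using A(2) rank_lt_card[of e N \<omega>] by simp
  qed
  then show ?thesis ..
qed

lemma isCr_created: "isCr N a \<omega> (created N a \<omega>)"
proof -
  have "created N a \<omega> = (THE A. isCr N a \<omega> A)"
    unfolding created_def isCr_def ccond_def by simp
  also have "isCr N a \<omega> (THE A. isCr N a \<omega> A)"
    using isCr_exists isCr_unique by (metis theI)
  finally show ?thesis by simp
qed

lemma created_eq: "isCr N a \<omega> A \<Longrightarrow> created N a \<omega> = A"
  using isCr_created isCr_unique by metis

lemma created_subset: "created N a \<omega> \<subseteq> Pairs N"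
  using isCr_created[of N a \<omega>] by (simp add: isCr_def)

lemma created_iff: "e \<in> Pairs N \<Longrightarrow> e \<in> created N a \<omega> \<longleftrightarrow> ccond a \<omega> (created N a \<omega>) e"
  using isCr_created[of N a \<omega>] by (simp add: isCr_def)

lemma created_cong:
  assumes "\<And>e f. e \<in> Pairs N \<Longrightarrow> f \<in> Pairs N \<Longrightarrow> prec \<omega> f e = prec \<omega>' f e"
  shows "created N a \<omega> = created N a \<omega>'"
proof -
  let ?A = "created N a \<omega>"
  have "isCr N a \<omega>' ?A"
    unfolding isCr_def
  proof (intro conjI ballI)
    show "?A \<subseteq> Pairs N" by (rule created_subset)
    fix e assume e: "e \<in> Pairs N"
    have "{f\<in>?A. prec \<omega> f e} = {f\<in>?A. prec \<omega>' f e}"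
      using assms e created_subset by blast
    then show "e \<in> ?A \<longleftrightarrow> ccond a \<omega>' ?A e"
      using created_iff[OF e] by (metis ccond_cong)
  qed
  then show ?thesis by (metis created_eq)
qed

lemma Ssol_subset: "Ssol N a \<omega> t \<subseteq> {..<N}"
  by (auto simp: Ssol_def)

lemma links_subset: "links N a \<omega> t \<subseteq> Pairs N"
  using created_subset by (auto simp: links_def)

lemma finite_links: "finite (links N a \<omega> t)"
  using links_subset finite_Pairs by (rule finite_subset)

lemma sol_cong:
  assumes "\<And>e f. e \<in> Pairs N \<Longrightarrow> f \<in> Pairs N \<Longrightarrow> prec \<omega> f e = prec \<omega>' f e"
    and "\<And>e. e \<in> Pairs N \<Longrightarrow> (\<omega> e \<le> t) = (\<omega>' e \<le> t')"
  shows "Ssol N a \<omega> t = Ssol N a \<omega>' t'" "Csol N a \<omega> t = Csol N a \<omega>' t'"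
proof -
  have C: "created N a \<omega> = created N a \<omega>'" using created_cong[OF assms(1)] .
  have "links N a \<omega> t = links N a \<omega>' t'"
    unfolding links_def C using created_subset[of N a \<omega>'] assms(2) by auto
  then show S: "Ssol N a \<omega> t = Ssol N a \<omega>' t'" by (simp add: Ssol_def)
  have "Pairs_on (Ssol N a \<omega> t) \<subseteq> Pairs N"
    using Ssol_subset[of N a \<omega> t] by (auto simp: Pairs_on_def Pairs_def)
  then show "Csol N a \<omega> t = Csol N a \<omega>' t'"
    unfolding Csol_def S[symmetric] using assms(2) by auto
qed

definition Rin :: "nat set \<Rightarrow> (nat \<times> nat \<Rightarrow> real) \<Rightarrow> real \<Rightarrow> (nat \<times> nat) set" where
  "Rin S \<omega> t = {e\<in>Pairs_on S. \<omega> e \<le> t}"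

definition nomix :: "nat set \<Rightarrow> (nat \<times> nat) set \<Rightarrow> bool" where
  "nomix S E \<longleftrightarrow> (\<forall>f\<in>E. fst f \<in> S \<longleftrightarrow> snd f \<in> S)"

lemma Pairs_on_sub: "S \<subseteq> {..<N} \<Longrightarrow> Pairs_on S \<subseteq> Pairs N"
  by (auto simp: Pairs_on_def Pairs_def)

lemma Pairs_on_iff: "S \<subseteq> {..<N} \<Longrightarrow> e \<in> Pairs N \<Longrightarrow> e \<in> Pairs_on S \<longleftrightarrow> fst e \<in> S \<and> snd e \<in> S"
  by (cases e) (auto simp: Pairs_on_def Pairs_def)

lemma nomix_Pairs_on: "nomix S (Pairs_on S)"
  by (auto simp: nomix_def Pairs_on_def)

lemma finite_Pairs_on: "finite S \<Longrightarrow> finite (Pairs_on S)"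
  by (rule finite_subset[of _ "S \<times> S"]) (auto simp: Pairs_on_def)

lemma links_nomix:
  assumes "Ssol N a \<omega> t = S"
  shows "nomix S (links N a \<omega> t)"
  unfolding nomix_def
proof
  fix e assume e: "e \<in> links N a \<omega> t"
  obtain u w where uw: "e = (u, w)" by (cases e)
  have "e \<in> Pairs N" using e links_subset by blast
  then have "u < N" "w < N" using uw by (auto simp: Pairs_def)
  moreover have "cluster (links N a \<omega> t) u = cluster (links N a \<omega> t) w"
    using e uw cluster_edge by blast
  ultimately show "fst e \<in> S \<longleftrightarrow> snd e \<in> S"
    using assms uw by (auto simp: Ssol_def)
qed

lemma cluster_lt_Ssol:
  assumes "Ssol N a \<omega> t = S" "v \<in> S" "E \<subseteq> links N a \<omega> t"
  shows "real (card (cluster E v)) < a"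
proof -
  have "card (cluster E v) \<le> card (cluster (links N a \<omega> t) v)"
    using assms(3) finite_links by (rule card_cluster_mono)
  moreover have "real (card (cluster (links N a \<omega> t) v)) < a"
    using assms(1,2) by (auto simp: Ssol_def)
  ultimately show ?thesis by linarith
qed

lemma Rin_links:
  assumes "Ssol N a \<omega> t = S"
  shows "Rin S \<omega> t \<subseteq> links N a \<omega> t"
proof
  fix e assume e: "e \<in> Rin S \<omega> t"
  have SN: "S \<subseteq> {..<N}" using assms Ssol_subset by blast
  have eP: "e \<in> Pairs N" using e Pairs_on_sub[OF SN] by (auto simp: Rin_def)
  have et: "\<omega> e \<le> t" using e by (auto simp: Rin_def)
  have ends: "fst e \<in> S" "snd e \<in> S" using e by (auto simp: Rin_def Pairs_on_def)
  have sub: "{f\<in>created N a \<omega>. prec \<omega> f e} \<subseteq> links N a \<omega> t"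
    using et prec_le by (fastforce simp: links_def)
  have "ccond a \<omega> (created N a \<omega>) e"
    unfolding ccond_def using cluster_lt_Ssol[OF assms _ sub] ends by auto
  then have "e \<in> created N a \<omega>" using created_iff[OF eP] by simp
  then show "e \<in> links N a \<omega> t" using et by (simp add: links_def)
qed

lemma no_big_Rin:
  assumes "Ssol N a \<omega> t = S"
  shows "no_big a S (Rin S \<omega> t)"
  unfolding no_big_def using cluster_lt_Ssol[OF assms _ Rin_links[OF assms]] by blast

lemma main_comb:
  assumes S1: "Ssol N a \<omega> t = S"
    and agree: "\<And>e. e \<in> Pairs N \<Longrightarrow> e \<notin> Pairs_on S \<Longrightarrow> \<omega>' e = \<omega> e"
    and nb: "no_big a S (Rin S \<omega>' t)"
  shows "Ssol N a \<omega>' t = S"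
proof -
  have SN: "S \<subseteq> {..<N}" using S1 Ssol_subset by blast
  define A where "A = created N a \<omega>"
  define A' where "A' = created N a \<omega>'"
  define L where "L = links N a \<omega> t"
  have nmL: "nomix S L" unfolding L_def by (rule links_nomix[OF S1])
  define P where "P e \<longleftrightarrow> (fst e \<in> S \<and> snd e \<in> S) \<or> (fst e \<notin> S \<and> snd e \<notin> S \<and> e \<in> A)" for e
  have claim: "\<forall>e\<in>Pairs N. rank N \<omega>' e = n \<longrightarrow> \<omega>' e \<le> t \<longrightarrow> (e \<in> A' \<longleftrightarrow> P e)" for n
  proof (induction n rule: less_induct)
    case (less n)
    show ?case
    proof (intro ballI impI)
      fix e assume eP: "e \<in> Pairs N" and rk: "rank N \<omega>' e = n" and et': "\<omega>' e \<le> t"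
      define D' where "D' = {f\<in>A'. prec \<omega>' f e}"
      define D where "D = {f\<in>A. prec \<omega> f e}"
      have D'eq: "D' = {f\<in>Pairs N. prec \<omega>' f e \<and> P f}"
      proof -
        have "f \<in> A' \<longleftrightarrow> P f" if f: "f \<in> Pairs N" "prec \<omega>' f e" for f
        proof -
          have "rank N \<omega>' f < n" using rank_less[OF f(2,1)] rk by simp
          moreover have "\<omega>' f \<le> t" using prec_le[OF f(2)] et' by simp
          ultimately show ?thesis using less.IH f(1) by blast
        qed
        moreover have "A' \<subseteq> Pairs N" unfolding A'_def by (rule created_subset)
        ultimately show ?thesis unfolding D'_def by blast
      qed
      have nmD': "nomix S D'" unfolding nomix_def D'eq P_def by blast
      have A'iff: "e \<in> A' \<longleftrightarrow> ccond a \<omega>' A' e" unfolding A'_def by (rule created_iff[OF eP])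
      have Aiff: "e \<in> A \<longleftrightarrow> ccond a \<omega> A e" unfolding A_def by (rule created_iff[OF eP])
      have outside: "cluster D' v = cluster D v \<and> nomix S D \<and> D \<subseteq> L"
        if notin: "\<not> (fst e \<in> S \<and> snd e \<in> S)" and vS: "v \<notin> S" for v
      proof -
        have eS: "e \<notin> Pairs_on S" using notin by (auto simp: Pairs_on_def)
        have ee: "\<omega>' e = \<omega> e" using agree[OF eP eS] .
        have DL: "D \<subseteq> L"
          unfolding D_def L_def links_def A_def using prec_le et' ee by fastforce
        have nmD: "nomix S D" using nmL DL unfolding nomix_def by blast
        have "{f\<in>D'. fst f \<in> S \<longleftrightarrow> v \<in> S} = {f\<in>D. fst f \<in> S \<longleftrightarrow> v \<in> S}"
        proof -
          have "f \<in> D' \<longleftrightarrow> f \<in> D" if "fst f \<notin> S" for f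
          proof
            assume f: "f \<in> D'"
            then have fP: "f \<in> Pairs N" "prec \<omega>' f e" "P f" using D'eq by auto
            then have fA: "f \<in> A" using that unfolding P_def by auto
            have "f \<notin> Pairs_on S" using that by (auto simp: Pairs_on_def)
            then have "\<omega>' f = \<omega> f" using agree fP(1) by blast
            then have "prec \<omega> f e" using fP(2) ee by (simp add: prec_def)
            then show "f \<in> D" using fA by (simp add: D_def)
          next
            assume f: "f \<in> D"
            then have fA: "f \<in> A" and pf: "prec \<omega> f e" by (auto simp: D_def)
            have fP: "f \<in> Pairs N" using fA created_subset unfolding A_def by blast
            have "f \<in> L" using f DL by blast
            then have "snd f \<notin> S" using nmL that unfolding nomix_def by blast
            then have Pf: "P f" using that fA by (simp add: P_def)
            have "f \<notin> Pairs_on S" using that by (auto simp: Pairs_on_def)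
            then have "\<omega>' f = \<omega> f" using agree fP by blast
            then have "prec \<omega>' f e" using pf ee by (simp add: prec_def)
            then show "f \<in> D'" using D'eq fP Pf by blast
          qed
          then show ?thesis using vS by blast
        qed
        then have "cluster D' v = cluster D v"
          using cluster_sep[of D' S D v] nmD' nmD unfolding nomix_def by blast
        then show ?thesis using nmD DL by blast
      qed
      show "e \<in> A' \<longleftrightarrow> P e"
      proof (cases "fst e \<in> S \<and> snd e \<in> S")
        case True
        have "ccond a \<omega>' A' e" unfolding ccond_def
        proof
          fix v assume v: "v \<in> {fst e, snd e}"
          then have vS: "v \<in> S" using True by auto
          let ?E = "{f\<in>D'. fst f \<in> S \<and> snd f \<in> S}"
          have nmE: "nomix S ?E" by (auto simp: nomix_def)
          have "{f\<in>D'. fst f \<in> S \<longleftrightarrow> v \<in> S} = {f\<in>?E. fst f \<in> S \<longleftrightarrow> v \<in> S}"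
            using nmD' vS unfolding nomix_def by blast
          then have c: "cluster D' v = cluster ?E v"
            using cluster_sep[of D' S ?E v] nmD' nmE unfolding nomix_def by blast
          have sub: "?E \<subseteq> Rin S \<omega>' t"
          proof
            fix f assume f: "f \<in> ?E"
            then have "f \<in> Pairs N" "prec \<omega>' f e" using D'eq by auto
            then show "f \<in> Rin S \<omega>' t"
              using f prec_le et' Pairs_on_iff[OF SN] by (fastforce simp: Rin_def)
          qed
          have "card (cluster ?E v) \<le> card (cluster (Rin S \<omega>' t) v)"
            by (rule card_cluster_mono[OF sub])
               (rule finite_subset[OF _ finite_Pairs], use Pairs_on_sub[OF SN] in \<open>auto simp: Rin_def\<close>)
          moreover have "real (card (cluster (Rin S \<omega>' t) v)) < a"
            using nb vS by (auto simp: no_big_def)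
          ultimately have "real (card (cluster ?E v)) < a"
            by (meson of_nat_le_iff order_le_less_trans)
          then show "real (card (cluster {f \<in> A'. prec \<omega>' f e} v)) < a"
            using c unfolding D'_def by simp
        qed
        then show ?thesis using A'iff True by (simp add: P_def)
      next
        case False
        show ?thesis
        proof (cases "fst e \<notin> S \<and> snd e \<notin> S")
          case True
          have "cluster D' v = cluster D v" if "v \<in> {fst e, snd e}" for v
            using outside[OF False] that True by blast
          then have "ccond a \<omega>' A' e = ccond a \<omega> A e"
            unfolding ccond_def D_def D'_def by simp
          then show ?thesis using A'iff Aiff True by (simp add: P_def)
        next
          case False2: False
          have eS: "e \<notin> Pairs_on S" using False by (auto simp: Pairs_on_def)
          have ee: "\<omega>' e = \<omega> e" using agree[OF eP eS] .
          have "e \<notin> A"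
          proof
            assume "e \<in> A"
            then have "e \<in> L" using et' ee by (simp add: L_def links_def A_def)
            then show False using nmL False False2 unfolding nomix_def by blast
          qed
          then have "\<not> ccond a \<omega> A e" using Aiff by simp
          then obtain v where v: "v \<in> {fst e, snd e}" and big: "\<not> real (card (cluster D v)) < a"
            unfolding ccond_def D_def by blast
          have vS: "v \<notin> S"
          proof
            assume vS: "v \<in> S"
            obtain w where "w \<notin> S" using False by blast
            then have "D \<subseteq> L" using outside[OF False] by blast
            then show False using cluster_lt_Ssol[OF S1 vS] big unfolding L_def by blast
          qed
          have "cluster D' v = cluster D v" using outside[OF False vS] by blast
          then have "\<not> ccond a \<omega>' A' e" using v big unfolding ccond_def D'_def by force
          then show ?thesis using A'iff False False2 by (auto simp: P_def)
        qed
      qed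
    qed
  qed
  have claim': "e \<in> A' \<longleftrightarrow> P e" if "e \<in> Pairs N" "\<omega>' e \<le> t" for e
    using claim that by blast
  define L' where "L' = links N a \<omega>' t"
  have L'eq: "L' = Rin S \<omega>' t \<union> {f\<in>L. fst f \<notin> S \<and> snd f \<notin> S}"
  proof -
    have "f \<in> L' \<longleftrightarrow> f \<in> Rin S \<omega>' t \<union> {f\<in>L. fst f \<notin> S \<and> snd f \<notin> S}" for f
    proof (cases "f \<in> Pairs N")
      case True
      show ?thesis
      proof (cases "fst f \<in> S \<and> snd f \<in> S")
        case True2: True
        then have "f \<in> Pairs_on S" using Pairs_on_iff[OF SN True] by simp
        then show ?thesis using claim'[OF True] True2
          by (auto simp: L'_def links_def A'_def Rin_def P_def)
      next
        case False
        then have "f \<notin> Pairs_on S" by (auto simp: Pairs_on_def)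
        then have "\<omega>' f = \<omega> f" using agree True by blast
        then show ?thesis using claim'[OF True] False
          by (auto simp: L'_def links_def A'_def Rin_def P_def L_def A_def Pairs_on_def)
      qed
    next
      case False
      have "f \<notin> L'" "f \<notin> L" "f \<notin> Pairs_on S"
        using False links_subset[of N a \<omega>' t] links_subset[of N a \<omega> t] Pairs_on_sub[OF SN]
        unfolding L'_def L_def by blast+
      then show ?thesis by (auto simp: Rin_def)
    qed
    then show ?thesis by blast
  qed
  have nmL': "nomix S L'" using L'eq unfolding nomix_def by (auto simp: Rin_def Pairs_on_def)
  have nmR: "nomix S (Rin S \<omega>' t)" by (auto simp: nomix_def Rin_def Pairs_on_def)
  show ?thesis
  proof (intro set_eqI iffI)
    fix v assume "v \<in> Ssol N a \<omega>' t"
    then have v: "v < N" "real (card (cluster L' v)) < a" by (auto simp: Ssol_def L'_def)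
    show "v \<in> S"
    proof (rule ccontr)
      assume vS: "v \<notin> S"
      have "{f\<in>L'. fst f \<in> S \<longleftrightarrow> v \<in> S} = {f\<in>L. fst f \<in> S \<longleftrightarrow> v \<in> S}"
        using L'eq vS nmL by (auto simp: Rin_def Pairs_on_def nomix_def)
      then have "cluster L' v = cluster L v"
        using cluster_sep[of L' S L v] nmL' nmL unfolding nomix_def by blast
      then have "v \<in> Ssol N a \<omega> t" using v by (simp add: Ssol_def L_def)
      then show False using S1 vS by simp
    qed
  next
    fix v assume vS: "v \<in> S"
    have "{f\<in>L'. fst f \<in> S \<longleftrightarrow> v \<in> S} = {f\<in>Rin S \<omega>' t. fst f \<in> S \<longleftrightarrow> v \<in> S}"
      using L'eq vS by (auto simp: Rin_def Pairs_on_def)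
    then have "cluster L' v = cluster (Rin S \<omega>' t) v"
      using cluster_sep[of L' S "Rin S \<omega>' t" v] nmL' nmR unfolding nomix_def by blast
    then show "v \<in> Ssol N a \<omega>' t"
      using nb vS SN unfolding no_big_def by (auto simp: Ssol_def L'_def)
  qed
qed

definition ED :: "nat \<Rightarrow> real measure" where
  "ED N = density lborel (exponential_density (1 / real N))"

lemma clock_space_ED: "clock_space N = PiM (Pairs N) (\<lambda>_. ED N)"
  by (simp add: clock_space_def ED_def)

lemma prob_ED: "N > 0 \<Longrightarrow> prob_space (ED N)"
  unfolding ED_def by (rule prob_space_exponential_density) simp

lemma sets_ED[simp, measurable_cong]: "sets (ED N) = sets borel"
  by (simp add: ED_def)

lemma space_ED[simp]: "space (ED N) = UNIV"
  by (simp add: ED_def)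

lemma prob_clock: "N > 0 \<Longrightarrow> prob_space (clock_space N)"
  unfolding clock_space_ED by (rule prob_space_PiM) (rule prob_ED)

lemma space_clock: "space (clock_space N) = PiE (Pairs N) (\<lambda>_. UNIV)"
  by (simp add: clock_space_ED space_PiM)

lemma comp_meas: "e \<in> Pairs N \<Longrightarrow> (\<lambda>\<omega>. \<omega> e) \<in> borel_measurable (clock_space N)"
proof -
  assume e: "e \<in> Pairs N"
  have "(\<lambda>\<omega>. \<omega> e) \<in> measurable (clock_space N) (ED N)"
    unfolding clock_space_ED using e by (rule measurable_component_singleton)
  then show ?thesis by (subst measurable_cong_sets[OF refl sets_ED[symmetric]])
qed

lemma ED_le: assumes "N > 0" "0 \<le> t" shows "measure (ED N) {..t} = pN N t"
proof -
  interpret prob_space "ED N" by (rule prob_ED[OF assms(1)])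
  have "distributed (ED N) lborel (\<lambda>x. x) (exponential_density (1 / real N))"
    unfolding distributed_def by (auto simp: ED_def distr_id2)
  from exponential_distributedD_le[OF this assms(2)] assms(1)
  have "measure (ED N) {x \<in> space (ED N). x \<le> t} = 1 - exp (- t * (1 / real N))" by simp
  moreover have "{x \<in> space (ED N). x \<le> t} = {..t}" by auto
  ultimately show ?thesis by (simp add: pN_def)
qed

lemma ED_gt: assumes "N > 0" "0 \<le> t" shows "measure (ED N) {t<..} = 1 - pN N t"
proof -
  interpret prob_space "ED N" by (rule prob_ED[OF assms(1)])
  have "{t<..} = space (ED N) - {..t}" by auto
  then have "measure (ED N) {t<..} = 1 - measure (ED N) {..t}"
    using prob_compl[of "{..t}"] by simp
  then show ?thesis using ED_le[OF assms] by simp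
qed

lemma measure_box:
  assumes N: "N > 0" and X: "\<And>e. e \<in> Pairs N \<Longrightarrow> X e \<in> sets borel"
  shows "measure (clock_space N) (PiE (Pairs N) X) = (\<Prod>e\<in>Pairs N. measure (ED N) (X e))"
proof -
  interpret product_sigma_finite "\<lambda>_. ED N"
    unfolding product_sigma_finite_def using prob_ED[OF N]
    by (simp add: prob_space_imp_sigma_finite)
  have "emeasure (clock_space N) (PiE (Pairs N) X) = (\<Prod>e\<in>Pairs N. emeasure (ED N) (X e))"
    unfolding clock_space_ED using X finite_Pairs by (intro emeasure_PiM) auto
  also have "\<dots> = (\<Prod>e\<in>Pairs N. ennreal (measure (ED N) (X e)))"
    using prob_ED[OF N] by (simp add: prob_space_def finite_measure.emeasure_eq_measure)
  also have "\<dots> = ennreal (\<Prod>e\<in>Pairs N. measure (ED N) (X e))"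
    by (simp add: prod_ennreal)
  finally show ?thesis
    by (simp add: measure_def prod_nonneg)
qed

lemma indep_coords:
  assumes N: "N > 0" and J: "J \<subseteq> Pairs N"
    and X: "X \<in> sets (clock_space N)" and Y: "Y \<in> sets (clock_space N)"
    and Xd: "\<And>\<omega> \<omega>'. \<omega> \<in> space (clock_space N) \<Longrightarrow> \<omega>' \<in> space (clock_space N) \<Longrightarrow>
              (\<forall>j\<in>J. \<omega> j = \<omega>' j) \<Longrightarrow> \<omega> \<in> X \<Longrightarrow> \<omega>' \<in> X"
    and Yd: "\<And>\<omega> \<omega>'. \<omega> \<in> space (clock_space N) \<Longrightarrow> \<omega>' \<in> space (clock_space N) \<Longrightarrow>
              (\<forall>j\<in>Pairs N - J. \<omega> j = \<omega>' j) \<Longrightarrow> \<omega> \<in> Y \<Longrightarrow> \<omega>' \<in> Y"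
  shows "measure (clock_space N) (X \<inter> Y) = measure (clock_space N) X * measure (clock_space N) Y"
proof -
  define K where "K = Pairs N - J"
  define M where "M = (\<lambda>_::nat\<times>nat. ED N)"
  define MJ where "MJ = PiM J M"
  define MK where "MK = PiM K M"
  have JK: "J \<inter> K = {}" "J \<union> K = Pairs N" using J by (auto simp: K_def)
  have fin: "finite J" "finite K" using J finite_Pairs finite_subset unfolding K_def by auto
  interpret product_sigma_finite M
    unfolding product_sigma_finite_def M_def using prob_ED[OF N]
    by (simp add: prob_space_imp_sigma_finite)
  interpret PJ: prob_space MJ unfolding MJ_def M_def by (rule prob_space_PiM) (rule prob_ED[OF N])
  interpret PK: prob_space MK unfolding MK_def M_def by (rule prob_space_PiM) (rule prob_ED[OF N])
  have C: "clock_space N = PiM (J \<union> K) M" using JK by (simp add: clock_space_ED M_def)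
  have D: "distr (MJ \<Otimes>\<^sub>M MK) (clock_space N) (merge J K) = clock_space N"
    unfolding C MJ_def MK_def by (rule distr_merge[OF JK(1) fin])
  have mm: "merge J K \<in> measurable (MJ \<Otimes>\<^sub>M MK) (clock_space N)"
    unfolding C MJ_def MK_def by (rule measurable_merge)
  have em: "emeasure (clock_space N) Z = emeasure (MJ \<Otimes>\<^sub>M MK) (merge J K -` Z \<inter> space (MJ \<Otimes>\<^sub>M MK))"
    if "Z \<in> sets (clock_space N)" for Z
    by (subst D[symmetric]) (rule emeasure_distr[OF mm that])
  define x0 where "x0 = restrict (\<lambda>_. 0::real) J"
  define y0 where "y0 = restrict (\<lambda>_. 0::real) K"
  have x0: "x0 \<in> space MJ" by (simp add: x0_def MJ_def space_PiM M_def)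
  have y0: "y0 \<in> space MK" by (simp add: y0_def MK_def space_PiM M_def)
  have m1: "(\<lambda>x. merge J K (x, y0)) \<in> measurable MJ (clock_space N)"
    using mm y0 by (intro measurable_compose[OF _ mm] measurable_Pair) auto
  have m2: "(\<lambda>y. merge J K (x0, y)) \<in> measurable MK (clock_space N)"
    using mm x0 by (intro measurable_compose[OF _ mm] measurable_Pair) auto
  define XJ where "XJ = (\<lambda>x. merge J K (x, y0)) -` X \<inter> space MJ"
  define YK where "YK = (\<lambda>y. merge J K (x0, y)) -` Y \<inter> space MK"
  have XJ: "XJ \<in> sets MJ" unfolding XJ_def using m1 X by (rule measurable_sets)
  have YK: "YK \<in> sets MK" unfolding YK_def using m2 Y by (rule measurable_sets)
  have sp: "merge J K (x, y) \<in> space (clock_space N)" if "x \<in> space MJ" "y \<in> space MK" for x y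
    using measurable_space[OF mm, of "(x, y)"] that by (simp add: space_pair_measure)
  have inX: "merge J K (x, y) \<in> X \<longleftrightarrow> x \<in> XJ" if "x \<in> space MJ" "y \<in> space MK" for x y
  proof -
    have agr: "\<forall>j\<in>J. merge J K (x, y) j = merge J K (x, y0) j" using JK by simp
    show ?thesis unfolding XJ_def using that sp[OF that] sp[OF that(1) y0] agr
      Xd[of "merge J K (x, y)" "merge J K (x, y0)"] Xd[of "merge J K (x, y0)" "merge J K (x, y)"]
      by auto
  qed
  have inY: "merge J K (x, y) \<in> Y \<longleftrightarrow> y \<in> YK" if "x \<in> space MJ" "y \<in> space MK" for x y
  proof -
    have agr: "\<forall>j\<in>Pairs N - J. merge J K (x, y) j = merge J K (x0, y) j"
      using JK unfolding K_def by auto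
    show ?thesis unfolding YK_def using that sp[OF that] sp[OF x0 that(2)] agr
      Yd[of "merge J K (x, y)" "merge J K (x0, y)"] Yd[of "merge J K (x0, y)" "merge J K (x, y)"]
      by auto
  qed
  have "merge J K -` (X \<inter> Y) \<inter> space (MJ \<Otimes>\<^sub>M MK) = XJ \<times> YK"
    using inX inY XJ_def YK_def by (auto simp: space_pair_measure)
  moreover have "merge J K -` X \<inter> space (MJ \<Otimes>\<^sub>M MK) = XJ \<times> space MK"
    using inX XJ_def by (auto simp: space_pair_measure)
  moreover have "merge J K -` Y \<inter> space (MJ \<Otimes>\<^sub>M MK) = space MJ \<times> YK"
    using inY YK_def by (auto simp: space_pair_measure)
  ultimately have
    e1: "emeasure (clock_space N) (X \<inter> Y) = emeasure MJ XJ * emeasure MK YK" and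
    e2: "emeasure (clock_space N) X = emeasure MJ XJ" and
    e3: "emeasure (clock_space N) Y = emeasure MK YK"
    using em[of "X \<inter> Y"] em[of X] em[of Y] X Y XJ YK
      PK.emeasure_pair_measure_Times[of XJ MJ YK] PK.emeasure_pair_measure_Times[of XJ MJ "space MK"]
      PK.emeasure_pair_measure_Times[of "space MJ" MJ YK]
    by (auto simp: PJ.emeasure_space_1 PK.emeasure_space_1)
  show ?thesis
    using e1 e2 e3 by (simp add: measure_def enn2real_mult)
qed

definition pat :: "nat \<Rightarrow> real \<Rightarrow> (nat \<times> nat \<Rightarrow> real) \<Rightarrow> (nat \<times> nat) set \<times> ((nat \<times> nat) \<times> (nat \<times> nat)) set" where
  "pat N t \<omega> = ({e\<in>Pairs N. \<omega> e \<le> t}, {(e, f). e \<in> Pairs N \<and> f \<in> Pairs N \<and> prec \<omega> f e})"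

lemma pat_sol:
  assumes "pat N t \<omega> = pat N t' \<omega>'"
  shows "Ssol N a \<omega> t = Ssol N a \<omega>' t'" "Csol N a \<omega> t = Csol N a \<omega>' t'"
proof -
  have 1: "prec \<omega> f e = prec \<omega>' f e" if "e \<in> Pairs N" "f \<in> Pairs N" for e f
  proof -
    have "(e,f) \<in> snd (pat N t \<omega>) \<longleftrightarrow> (e,f) \<in> snd (pat N t' \<omega>')" using assms by simp
    then show ?thesis using that by (simp add: pat_def)
  qed
  have 2: "(\<omega> e \<le> t) = (\<omega>' e \<le> t')" if "e \<in> Pairs N" for e
  proof -
    have "e \<in> fst (pat N t \<omega>) \<longleftrightarrow> e \<in> fst (pat N t' \<omega>')" using assms by simp
    then show ?thesis using that by (simp add: pat_def)
  qed
  show "Ssol N a \<omega> t = Ssol N a \<omega>' t'" "Csol N a \<omega> t = Csol N a \<omega>' t'"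
    using sol_cong[OF 1 2] by blast+
qed

lemma pat_Rin:
  assumes "pat N t \<omega> = pat N t \<omega>'" "S \<subseteq> {..<N}"
  shows "Rin S \<omega> t = Rin S \<omega>' t"
proof -
  have 2: "(\<omega> e \<le> t) = (\<omega>' e \<le> t)" if "e \<in> Pairs N" for e
  proof -
    have "e \<in> fst (pat N t \<omega>) \<longleftrightarrow> e \<in> fst (pat N t \<omega>')" using assms by simp
    then show ?thesis using that by (simp add: pat_def)
  qed
  then show ?thesis using Pairs_on_sub[OF assms(2)] unfolding Rin_def by blast
qed

definition modS :: "nat set \<Rightarrow> real \<Rightarrow> (nat \<times> nat \<Rightarrow> real) \<Rightarrow> (nat \<times> nat \<Rightarrow> real)" where
  "modS S c \<omega> = (\<lambda>e. if e \<in> Pairs_on S then c else \<omega> e)"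

lemma modS_empty[simp]: "modS {} c \<omega> = \<omega>"
  by (simp add: modS_def Pairs_on_def)

lemma modS_meas: "e \<in> Pairs N \<Longrightarrow> (\<lambda>\<omega>. modS S c \<omega> e) \<in> borel_measurable (clock_space N)"
  by (cases "e \<in> Pairs_on S") (simp_all add: modS_def comp_meas)

lemma pat_level:
  "{\<omega>\<in>space (clock_space N). pat N t (modS S c \<omega>) = d} \<in> sets (clock_space N)"
proof -
  let ?M = "clock_space N"
  let ?g = "\<lambda>e \<omega>. modS S c \<omega> e"
  have eq: "{\<omega>\<in>space ?M. pat N t (modS S c \<omega>) = d} =
     {\<omega>\<in>space ?M. (fst d \<subseteq> Pairs N \<and> snd d \<subseteq> Pairs N \<times> Pairs N) \<and>
        (\<forall>e\<in>Pairs N. (?g e \<omega> \<le> t) = (e \<in> fst d)) \<and>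
        (\<forall>e\<in>Pairs N. \<forall>f\<in>Pairs N. prec (modS S c \<omega>) f e = ((e, f) \<in> snd d))}"
    by (cases d) (auto simp: pat_def)
  have p1: "{\<omega>\<in>space ?M. (?g e \<omega> \<le> t) = (e \<in> fst d)} \<in> sets ?M" if "e \<in> Pairs N" for e
  proof -
    define g where "g = (\<lambda>\<omega>. modS S c \<omega> e)"
    have [measurable]: "g \<in> borel_measurable ?M" unfolding g_def using that by (rule modS_meas)
    have "{\<omega>\<in>space ?M. (g \<omega> \<le> t) = (e \<in> fst d)} \<in> sets ?M" by measurable
    then show ?thesis by (simp add: g_def)
  qed
  have p2: "{\<omega>\<in>space ?M. prec (modS S c \<omega>) f e = ((e, f) \<in> snd d)} \<in> sets ?M"
    if "e \<in> Pairs N" "f \<in> Pairs N" for e f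
  proof -
    define g where "g = (\<lambda>\<omega>. modS S c \<omega> e)"
    define h where "h = (\<lambda>\<omega>. modS S c \<omega> f)"
    have gm[measurable]: "g \<in> borel_measurable ?M" unfolding g_def using that(1) by (rule modS_meas)
    have hm[measurable]: "h \<in> borel_measurable ?M" unfolding h_def using that(2) by (rule modS_meas)
    have pr: "Measurable.pred ?M (\<lambda>\<omega>. h \<omega> < g \<omega> \<or> (h \<omega> \<le> g \<omega> \<and> g \<omega> \<le> h \<omega> \<and> L))" for L
    proof -
      have pr1: "Measurable.pred ?M (\<lambda>\<omega>. h \<omega> < g \<omega> \<or> (h \<omega> \<le> g \<omega> \<and> g \<omega> \<le> h \<omega>))"
        using borel_measurable_le[OF hm gm] borel_measurable_le[OF gm hm] borel_measurable_less[OF hm gm]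
        unfolding pred_def by (intro sets.sets_Collect_disj sets.sets_Collect_conj) auto
      have pr2: "Measurable.pred ?M (\<lambda>\<omega>. h \<omega> < g \<omega>)" by measurable
      show ?thesis by (cases L) (use pr1 pr2 in simp_all)
    qed
    have "{\<omega>\<in>space ?M. (h \<omega> < g \<omega> \<or> (h \<omega> \<le> g \<omega> \<and> g \<omega> \<le> h \<omega> \<and>
        (fst f < fst e \<or> (fst f = fst e \<and> snd f < snd e)))) = ((e, f) \<in> snd d)} \<in> sets ?M"
    proof (cases "(e, f) \<in> snd d")
      case True then show ?thesis using pr[of "fst f < fst e \<or> (fst f = fst e \<and> snd f < snd e)"]
        by (simp add: pred_def)
    next
      case False
      let ?Q = "\<lambda>\<omega>. h \<omega> < g \<omega> \<or> (h \<omega> \<le> g \<omega> \<and> g \<omega> \<le> h \<omega> \<and>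
        (fst f < fst e \<or> (fst f = fst e \<and> snd f < snd e)))"
      have "{\<omega>\<in>space ?M. ?Q \<omega> = ((e, f) \<in> snd d)} = space ?M - {\<omega>\<in>space ?M. ?Q \<omega>}"
        using False by auto
      moreover have "{\<omega>\<in>space ?M. ?Q \<omega>} \<in> sets ?M"
        using pr[of "fst f < fst e \<or> (fst f = fst e \<and> snd f < snd e)"] by (simp add: pred_def)
      ultimately show ?thesis by auto
    qed
    moreover have "h \<omega> = g \<omega> \<longleftrightarrow> h \<omega> \<le> g \<omega> \<and> g \<omega> \<le> h \<omega>" for \<omega> by auto
    ultimately show ?thesis by (simp add: g_def h_def prec_def del: order_class.order_eq_iff)
  qed
  show ?thesis unfolding eq
    using p1 p2 finite_Pairs
    by (intro sets.sets_Collect_conj sets.sets_Collect_const sets.sets_Collect_finite_All) auto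
qed

lemma pat_sets:
  assumes "\<And>\<omega> \<omega>'. pat N t \<omega> = pat N t \<omega>' \<Longrightarrow> P \<omega> = P \<omega>'"
  shows "{\<omega>\<in>space (clock_space N). P (modS S c \<omega>)} \<in> sets (clock_space N)"
proof -
  let ?M = "clock_space N"
  define Fin where "Fin = Pow (Pairs N) \<times> Pow (Pairs N \<times> Pairs N)"
  have fin: "finite Fin" unfolding Fin_def using finite_Pairs by simp
  have inF: "pat N t \<omega> \<in> Fin" for \<omega> unfolding Fin_def pat_def by auto
  have "{\<omega>\<in>space ?M. P (modS S c \<omega>)} =
     (\<Union>d\<in>{d\<in>Fin. \<exists>\<omega>. pat N t \<omega> = d \<and> P \<omega>}. {\<omega>\<in>space ?M. pat N t (modS S c \<omega>) = d})"
    using inF assms by blast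
  also have "\<dots> \<in> sets ?M"
    using fin pat_level by (intro sets.finite_UN) auto
  finally show ?thesis .
qed

lemma sets_Ssol[measurable]:
  "{\<omega>\<in>space (clock_space N). Q (Ssol N a \<omega> t) (Csol N a \<omega> t)} \<in> sets (clock_space N)"
proof -
  have "{\<omega>\<in>space (clock_space N). (\<lambda>\<omega>. Q (Ssol N a \<omega> t) (Csol N a \<omega> t)) (modS {} 0 \<omega>)}
      \<in> sets (clock_space N)"
  proof (rule pat_sets)
    fix \<omega> \<omega>' assume "pat N t \<omega> = pat N t \<omega>'"
    from pat_sol[OF this] show "Q (Ssol N a \<omega> t) (Csol N a \<omega> t) = Q (Ssol N a \<omega>' t) (Csol N a \<omega>' t)"
      by simp
  qed
  then show ?thesis by simp
qed

lemma sets_Rin: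
  "S \<subseteq> {..<N} \<Longrightarrow> {\<omega>\<in>space (clock_space N). Rin S \<omega> t = H} \<in> sets (clock_space N)"
proof -
  assume S: "S \<subseteq> {..<N}"
  have "{\<omega>\<in>space (clock_space N). (\<lambda>\<omega>. Rin S \<omega> t = H) (modS {} 0 \<omega>)} \<in> sets (clock_space N)"
  proof (rule pat_sets)
    fix \<omega> \<omega>' assume "pat N t \<omega> = pat N t \<omega>'"
    from pat_Rin[OF this S] show "(Rin S \<omega> t = H) = (Rin S \<omega>' t = H)" by simp
  qed
  then show ?thesis by simp
qed

definition Opos :: "nat \<Rightarrow> (nat \<times> nat \<Rightarrow> real) set" where
  "Opos N = {\<omega>\<in>space (clock_space N). \<forall>e\<in>Pairs N. 0 < \<omega> e}"

lemma sets_Opos[measurable]: "Opos N \<in> sets (clock_space N)"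
  unfolding Opos_def using finite_Pairs
proof (intro sets.sets_Collect_finite_All)
  fix e assume e: "e \<in> Pairs N"
  define g where "g = (\<lambda>\<omega>::nat\<times>nat\<Rightarrow>real. \<omega> e)"
  have [measurable]: "g \<in> borel_measurable (clock_space N)" unfolding g_def using e by (rule comp_meas)
  have "{\<omega>\<in>space (clock_space N). 0 < g \<omega>} \<in> sets (clock_space N)" by measurable
  then show "{\<omega>\<in>space (clock_space N). 0 < \<omega> e} \<in> sets (clock_space N)" by (simp add: g_def)
qed (rule finite_Pairs)

lemma AE_Opos: assumes N: "N > 0" shows "AE \<omega> in clock_space N. \<omega> \<in> Opos N"
proof -
  have ED: "AE x in ED N. 0 < x"
  proof (rule AE_I')
    show "{..0} \<in> null_sets (ED N)"
      using ED_le[OF N, of 0] prob_ED[OF N]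
      by (simp add: null_sets_def pN_def prob_space_def finite_measure.emeasure_eq_measure)
    show "{x \<in> space (ED N). \<not> 0 < x} \<subseteq> {..0}" by auto
  qed
  have "AE \<omega> in clock_space N. \<forall>e\<in>Pairs N. 0 < \<omega> e"
    using finite_Pairs
  proof (rule AE_finite_allI)
    fix e assume "e \<in> Pairs N"
    then show "AE \<omega> in clock_space N. 0 < \<omega> e"
      unfolding clock_space_ED using ED prob_ED[OF N] by (intro AE_PiM_component) auto
  qed
  then show ?thesis by (auto simp: Opos_def)
qed

lemma measure_Opos:
  assumes "N > 0" "Z \<in> sets (clock_space N)"
  shows "measure (clock_space N) (Z \<inter> Opos N) = measure (clock_space N) Z"
  using AE_Opos[OF assms(1)] assms(2) by (intro measure_eq_AE) auto

lemma pN_bounds: "0 \<le> t \<Longrightarrow> 0 \<le> pN N t \<and> pN N t \<le> 1"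
  by (simp add: pN_def divide_nonneg_nonneg)

lemma er_weight_nonneg: "0 \<le> p \<Longrightarrow> p \<le> 1 \<Longrightarrow> 0 \<le> er_weight S p G"
  by (simp add: er_weight_def)

lemma Rin_sub: "Rin S \<omega> t \<subseteq> Pairs_on S"
  by (auto simp: Rin_def)

lemma box_Rin:
  assumes N: "N > 0" and SN: "S \<subseteq> {..<N}" and t: "0 \<le> t" and H: "H \<subseteq> Pairs_on S"
  shows "measure (clock_space N) {\<omega>\<in>space (clock_space N). Rin S \<omega> t = H} = er_weight S (pN N t) H"
proof -
  define X where "X e = (if e \<in> H then {..t} else if e \<in> Pairs_on S then {t<..} else UNIV)" for e
  have PS: "Pairs_on S \<subseteq> Pairs N" by (rule Pairs_on_sub[OF SN])
  have eq: "{\<omega>\<in>space (clock_space N). Rin S \<omega> t = H} = PiE (Pairs N) X"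
  proof (intro set_eqI iffI)
    fix \<omega> assume \<omega>: "\<omega> \<in> {\<omega>\<in>space (clock_space N). Rin S \<omega> t = H}"
    then have sp: "\<omega> \<in> PiE (Pairs N) (\<lambda>_. UNIV)" and R: "Rin S \<omega> t = H" by (auto simp: space_clock)
    have "\<omega> e \<in> X e" if "e \<in> Pairs N" for e
      using R H unfolding X_def Rin_def by auto
    then show "\<omega> \<in> PiE (Pairs N) X" using sp by (auto simp: PiE_iff)
  next
    fix \<omega> assume \<omega>: "\<omega> \<in> PiE (Pairs N) X"
    then have "\<omega> \<in> space (clock_space N)" by (auto simp: space_clock PiE_iff)
    moreover have "Rin S \<omega> t = H"
    proof -
      have "\<omega> e \<in> X e" if "e \<in> Pairs N" for e using \<omega> that by (auto simp: PiE_iff)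
      then show ?thesis using H PS unfolding X_def Rin_def by (force split: if_splits)
    qed
    ultimately show "\<omega> \<in> {\<omega>\<in>space (clock_space N). Rin S \<omega> t = H}" by simp
  qed
  have m1: "measure (ED N) UNIV = 1"
    using prob_ED[OF N] prob_space.prob_space[of "ED N"] by simp
  let ?f = "\<lambda>e. measure (ED N) (X e)"
  have "measure (clock_space N) (PiE (Pairs N) X) = (\<Prod>e\<in>Pairs N. ?f e)"
    by (rule measure_box[OF N]) (auto simp: X_def)
  also have "\<dots> = (\<Prod>e\<in>Pairs_on S. ?f e)"
    using PS finite_Pairs m1 H by (intro prod.mono_neutral_right) (auto simp: X_def)
  also have "\<dots> = (\<Prod>e\<in>H. ?f e) * (\<Prod>e\<in>Pairs_on S - H. ?f e)"
    using H finite_subset[OF PS finite_Pairs] by (simp add: prod.subset_diff mult.commute)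
  also have "(\<Prod>e\<in>H. ?f e) = (\<Prod>e\<in>H. pN N t)"
    using ED_le[OF N t] by (intro prod.cong) (auto simp: X_def)
  also have "(\<Prod>e\<in>Pairs_on S - H. ?f e) = (\<Prod>e\<in>Pairs_on S - H. 1 - pN N t)"
    using ED_gt[OF N t] by (intro prod.cong) (auto simp: X_def)
  also have "(\<Prod>e\<in>H. pN N t) * (\<Prod>e\<in>Pairs_on S - H. 1 - pN N t) = er_weight S (pN N t) H"
    using H finite_subset[OF PS finite_Pairs] finite_subset[OF H]
    by (simp add: er_weight_def card_Diff_subset)
  finally show ?thesis using eq by simp
qed

lemma no_big_empty:
  assumes "Ssol N a \<omega> t = S" shows "no_big a S {}"
  unfolding no_big_def using cluster_lt_Ssol[OF assms, of _ "{}"] by blast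

lemma Rin_modS: "Rin S (modS S (t + 1) \<omega>) t = {}"
  by (auto simp: Rin_def modS_def)

lemma modS_agree: "e \<notin> Pairs_on S \<Longrightarrow> modS S c \<omega> e = \<omega> e"
  by (simp add: modS_def)

lemma DL:
  assumes N: "N > 0" and SN: "S \<subseteq> {..<N}" and t: "0 \<le> t"
  shows "measure (clock_space N) {\<omega>\<in>space (clock_space N). Ssol N a \<omega> t = S \<and> Rin S \<omega> t = G}
     = ER_cond a S (pN N t) G * measure (clock_space N) {\<omega>\<in>space (clock_space N). Ssol N a \<omega> t = S}"
proof -
  let ?M = "clock_space N"
  let ?p = "pN N t"
  interpret P: prob_space ?M by (rule prob_clock[OF N])
  define Psi where "Psi = {\<omega>\<in>space ?M. Ssol N a (modS S (t + 1) \<omega>) t = S}"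
  define Box where "Box H = {\<omega>\<in>space ?M. Rin S \<omega> t = H}" for H
  define Ev where "Ev H = {\<omega>\<in>space ?M. Ssol N a \<omega> t = S \<and> Rin S \<omega> t = H}" for H
  have PsiS: "Psi \<in> sets ?M" unfolding Psi_def
  proof (rule pat_sets)
    fix \<omega> \<omega>' assume "pat N t \<omega> = pat N t \<omega>'"
    from pat_sol[OF this] show "(Ssol N a \<omega> t = S) = (Ssol N a \<omega>' t = S)" by simp
  qed
  have BoxS: "Box H \<in> sets ?M" for H unfolding Box_def by (rule sets_Rin[OF SN])
  have key: "Ev H = (if no_big a S H then Box H \<inter> Psi else {})" for H
  proof (intro set_eqI iffI)
    fix \<omega> assume "\<omega> \<in> Ev H"
    then have \<omega>: "\<omega> \<in> space ?M" "Ssol N a \<omega> t = S" "Rin S \<omega> t = H" by (auto simp: Ev_def)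
    have nb: "no_big a S H" using no_big_Rin[OF \<omega>(2)] \<omega>(3) by simp
    have "Ssol N a (modS S (t + 1) \<omega>) t = S"
      by (rule main_comb[OF \<omega>(2)]) (auto simp: modS_agree Rin_modS no_big_empty[OF \<omega>(2)])
    then show "\<omega> \<in> (if no_big a S H then Box H \<inter> Psi else {})"
      using nb \<omega> by (simp add: Box_def Psi_def)
  next
    fix \<omega> assume \<omega>: "\<omega> \<in> (if no_big a S H then Box H \<inter> Psi else {})"
    then have nb: "no_big a S H" by (auto split: if_splits)
    with \<omega> have \<omega>': "\<omega> \<in> space ?M" "Rin S \<omega> t = H" "Ssol N a (modS S (t + 1) \<omega>) t = S"
      by (auto simp: Box_def Psi_def)
    have "Ssol N a \<omega> t = S"
      by (rule main_comb[OF \<omega>'(3)]) (use nb \<omega>'(2) in \<open>auto simp: modS_agree\<close>)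
    then show "\<omega> \<in> Ev H" using \<omega>' by (simp add: Ev_def)
  qed
  have indep: "measure ?M (Box H \<inter> Psi) = measure ?M (Box H) * measure ?M Psi" for H
  proof (rule indep_coords[OF N Pairs_on_sub[OF SN] BoxS PsiS])
    fix \<omega> \<omega>' assume "\<omega> \<in> space ?M" "\<omega>' \<in> space ?M" "\<forall>j\<in>Pairs_on S. \<omega> j = \<omega>' j" "\<omega> \<in> Box H"
    then show "\<omega>' \<in> Box H" unfolding Box_def Rin_def by auto
  next
    fix \<omega> \<omega>' assume sp: "\<omega> \<in> space ?M" "\<omega>' \<in> space ?M"
      and ag: "\<forall>j\<in>Pairs N - Pairs_on S. \<omega> j = \<omega>' j" and "\<omega> \<in> Psi"
    have "modS S (t + 1) \<omega> = modS S (t + 1) \<omega>'"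
    proof
      fix e show "modS S (t + 1) \<omega> e = modS S (t + 1) \<omega>' e"
      proof (cases "e \<in> Pairs N")
        case True then show ?thesis using ag by (simp add: modS_def)
      next
        case False
        then have "\<omega> e = undefined" "\<omega>' e = undefined" using sp False PiE_arb[of _ "Pairs N" "\<lambda>_. UNIV"] by (simp_all add: space_clock)
        then show ?thesis by (simp add: modS_def)
      qed
    qed
    then show "\<omega>' \<in> Psi" using \<open>\<omega> \<in> Psi\<close> sp by (simp add: Psi_def)
  qed
  have finP: "finite (Pow (Pairs_on S))"
    using finite_subset[OF Pairs_on_sub[OF SN] finite_Pairs] by simp
  have EvS: "Ev H \<in> sets ?M" for H
    using key[of H] BoxS PsiS by (auto split: if_splits)
  have mEv: "measure ?M (Ev H) = (if H \<subseteq> Pairs_on S \<and> no_big a S H then er_weight S ?p H * measure ?M Psi else 0)" for H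
  proof (cases "H \<subseteq> Pairs_on S")
    case True
    then show ?thesis using key[of H] indep[of H] box_Rin[OF N SN t True] by (simp add: Box_def)
  next
    case False
    then have "Ev H = {}" using Rin_sub unfolding Ev_def by blast
    then show ?thesis using False by simp
  qed
  have "{\<omega>\<in>space ?M. Ssol N a \<omega> t = S} = (\<Union>H\<in>Pow (Pairs_on S). Ev H)"
    using Rin_sub unfolding Ev_def by blast
  then have "measure ?M {\<omega>\<in>space ?M. Ssol N a \<omega> t = S} = (\<Sum>H\<in>Pow (Pairs_on S). measure ?M (Ev H))"
  proof -
    have disj: "disjoint_family_on Ev (Pow (Pairs_on S))" by (auto simp: disjoint_family_on_def Ev_def)
    have "measure ?M (\<Union>H\<in>Pow (Pairs_on S). Ev H) = (\<Sum>H\<in>Pow (Pairs_on S). measure ?M (Ev H))"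
      using finP EvS disj by (intro P.finite_measure_finite_Union) auto
    then show ?thesis using \<open>{\<omega>\<in>space ?M. Ssol N a \<omega> t = S} = (\<Union>H\<in>Pow (Pairs_on S). Ev H)\<close> by simp
  qed
  also have "\<dots> = (\<Sum>H\<in>Pow (Pairs_on S). if no_big a S H then er_weight S ?p H * measure ?M Psi else 0)"
    using mEv by (intro sum.cong) auto
  also have "\<dots> = (\<Sum>H\<in>{H\<in>Pow (Pairs_on S). no_big a S H}. er_weight S ?p H * measure ?M Psi)"
    by (rule sum.inter_filter[OF finP, symmetric])
  also have "{H\<in>Pow (Pairs_on S). no_big a S H} = {H. H \<subseteq> Pairs_on S \<and> no_big a S H}" by auto
  also have "(\<Sum>H\<in>{H. H \<subseteq> Pairs_on S \<and> no_big a S H}. er_weight S ?p H * measure ?M Psi) =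
     (\<Sum>H\<in>{H. H \<subseteq> Pairs_on S \<and> no_big a S H}. er_weight S ?p H) * measure ?M Psi"
    by (rule sum_distrib_right[symmetric])
  finally have mS: "measure ?M {\<omega>\<in>space ?M. Ssol N a \<omega> t = S} =
     (\<Sum>H\<in>{H. H \<subseteq> Pairs_on S \<and> no_big a S H}. er_weight S ?p H) * measure ?M Psi" .
  define Sig where "Sig = (\<Sum>H\<in>{H. H \<subseteq> Pairs_on S \<and> no_big a S H}. er_weight S ?p H)"
  have wnn: "0 \<le> er_weight S ?p H" for H using pN_bounds[OF t] er_weight_nonneg by blast
  show ?thesis
  proof (cases "G \<subseteq> Pairs_on S \<and> no_big a S G")
    case True
    have finI: "finite {H. H \<subseteq> Pairs_on S \<and> no_big a S H}" using finP by (rule finite_subset[rotated]) auto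
    have le: "er_weight S ?p G \<le> Sig"
      unfolding Sig_def using True wnn finI by (intro member_le_sum) auto
    have "measure ?M (Ev G) = er_weight S ?p G * measure ?M Psi" using mEv[of G] True by simp
    moreover have "ER_cond a S ?p G = er_weight S ?p G / Sig" using True by (simp add: ER_cond_def Sig_def)
    ultimately show ?thesis
      using mS le wnn[of G] unfolding Ev_def Sig_def[symmetric]
      by (cases "Sig = 0") auto
  next
    case False
    then have "ER_cond a S ?p G = 0" unfolding ER_cond_def by auto
    moreover have "measure ?M (Ev G) = 0" using mEv[of G] False by simp
    ultimately show ?thesis by (simp add: Ev_def)
  qed
qed

lemma trunc_meas:
  "e \<in> Pairs N \<Longrightarrow> (\<lambda>\<omega>. if \<omega> e \<le> t then \<omega> e else 0) \<in> borel_measurable (clock_space N)"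
proof -
  assume e: "e \<in> Pairs N"
  define g where "g = (\<lambda>\<omega>::nat\<times>nat\<Rightarrow>real. \<omega> e)"
  have [measurable]: "g \<in> borel_measurable (clock_space N)" unfolding g_def using e by (rule comp_meas)
  have "(\<lambda>\<omega>. if g \<omega> \<le> t then g \<omega> else 0) \<in> borel_measurable (clock_space N)" by measurable
  then show ?thesis by (simp add: g_def cong: if_cong)
qed

lemma filt_sub: "P \<subseteq> Pairs N \<Longrightarrow> filt N P t \<subseteq> sets (clock_space N)"
  unfolding filt_def
proof (rule sets.sigma_sets_subset)
  assume P: "P \<subseteq> Pairs N"
  show "(\<Union>e\<in>P. {(\<lambda>\<omega>. if \<omega> e \<le> t then \<omega> e else 0) -` B \<inter> space (clock_space N) |B. B \<in> sets borel})
      \<subseteq> sets (clock_space N)"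
    using P trunc_meas by (auto intro: measurable_sets)
qed

definition Bset :: "nat \<Rightarrow> nat set \<Rightarrow> real \<Rightarrow> (nat \<times> nat) set \<Rightarrow> (nat \<times> nat \<Rightarrow> real) set" where
  "Bset N S t G = {\<omega>\<in>space (clock_space N).
      \<forall>e\<in>Pairs_on S. ((if \<omega> e \<le> t then \<omega> e else 0) \<noteq> 0) = (e \<in> G)}"

lemma Bset_FS: "S \<subseteq> {..<N} \<Longrightarrow> Bset N S t G \<in> FS N S t"
proof -
  assume SN: "S \<subseteq> {..<N}"
  let ?sp = "space (clock_space N)"
  let ?gen = "(\<Union>e\<in>Pairs_on S. {(\<lambda>\<omega>. if \<omega> e \<le> t then \<omega> e else 0) -` B \<inter> ?sp |B. B \<in> sets borel})"
  have sa: "sigma_algebra ?sp (sigma_sets ?sp ?gen)"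
    by (rule sigma_algebra_sigma_sets) auto
  have fin: "finite (Pairs_on S)"
    by (rule finite_Pairs_on[OF finite_subset[OF SN finite_lessThan]])
  have one: "{\<omega>\<in>?sp. ((if \<omega> e \<le> t then \<omega> e else 0) \<noteq> 0) = (e \<in> G)} \<in> sigma_sets ?sp ?gen"
    if e: "e \<in> Pairs_on S" for e
  proof (cases "e \<in> G")
    case True
    have "{\<omega>\<in>?sp. ((if \<omega> e \<le> t then \<omega> e else 0) \<noteq> 0) = (e \<in> G)} =
        (\<lambda>\<omega>. if \<omega> e \<le> t then \<omega> e else 0) -` (UNIV - {0}) \<inter> ?sp" using True by (auto split: if_splits)
    moreover have "(\<lambda>\<omega>. if \<omega> e \<le> t then \<omega> e else 0) -` (UNIV - {0}) \<inter> ?sp \<in> ?gen"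
      by (rule UN_I[OF e], rule CollectI, rule exI[of _ "UNIV - {0}"]) simp
    ultimately show ?thesis by (simp add: sigma_sets.Basic)
  next
    case False
    have "{\<omega>\<in>?sp. ((if \<omega> e \<le> t then \<omega> e else 0) \<noteq> 0) = (e \<in> G)} =
        (\<lambda>\<omega>. if \<omega> e \<le> t then \<omega> e else 0) -` {0} \<inter> ?sp" using False by (auto split: if_splits)
    moreover have "(\<lambda>\<omega>. if \<omega> e \<le> t then \<omega> e else 0) -` {0} \<inter> ?sp \<in> ?gen"
      by (rule UN_I[OF e], rule CollectI, rule exI[of _ "{0}"]) simp
    ultimately show ?thesis by (simp add: sigma_sets.Basic)
  qed
  have "{\<omega>\<in>?sp. \<forall>e\<in>Pairs_on S. ((if \<omega> e \<le> t then \<omega> e else 0) \<noteq> 0) = (e \<in> G)} \<in> sigma_sets ?sp ?gen"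
    using algebra.sets_Collect_finite_All[OF sigma_algebra.axioms(1)[OF sa] one fin] .
  then show ?thesis by (simp add: Bset_def FS_def filt_def)
qed

lemma Csol_Rin: "Ssol N a \<omega> t = S \<Longrightarrow> Csol N a \<omega> t = Rin S \<omega> t"
  by (simp add: Csol_def Rin_def)

lemma step1:
  fixes X :: "(nat \<times> nat \<Rightarrow> real) set"
  assumes N: "N > 0" and SN: "S \<subseteq> {..<N}" and t: "0 \<le> t" and X: "X \<in> sets (clock_space N)"
    and ind: "\<And>B. B \<in> FS N S t \<Longrightarrow>
       measure (clock_space N) (X \<inter> B \<inter> {\<omega>\<in>space (clock_space N). Ssol N a \<omega> t = S}) *
         measure (clock_space N) {\<omega>\<in>space (clock_space N). Ssol N a \<omega> t = S}
       = measure (clock_space N) (X \<inter> {\<omega>\<in>space (clock_space N). Ssol N a \<omega> t = S}) *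
         measure (clock_space N) (B \<inter> {\<omega>\<in>space (clock_space N). Ssol N a \<omega> t = S})"
  shows "measure (clock_space N) (X \<inter> {\<omega>\<in>space (clock_space N). Ssol N a \<omega> t = S \<and> Csol N a \<omega> t = G})
     = ER_cond a S (pN N t) G * measure (clock_space N) (X \<inter> {\<omega>\<in>space (clock_space N). Ssol N a \<omega> t = S})"
proof -
  let ?M = "clock_space N"
  interpret P: prob_space ?M by (rule prob_clock[OF N])
  define E where "E = {\<omega>\<in>space ?M. Ssol N a \<omega> t = S}"
  define EC where "EC = {\<omega>\<in>space ?M. Ssol N a \<omega> t = S \<and> Csol N a \<omega> t = G}"
  have ES: "E \<in> sets ?M" unfolding E_def by (rule sets_Ssol)
  have ECS: "EC \<in> sets ?M" unfolding EC_def by (rule sets_Ssol)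
  have ECR: "EC = {\<omega>\<in>space ?M. Ssol N a \<omega> t = S \<and> Rin S \<omega> t = G}"
    unfolding EC_def using Csol_Rin by blast
  have ECE: "EC \<subseteq> E" unfolding EC_def E_def by blast
  show ?thesis
  proof (cases "G \<subseteq> Pairs_on S")
    case False
    then have "EC = {}" unfolding ECR using Rin_sub by blast
    moreover have "ER_cond a S (pN N t) G = 0" using False by (simp add: ER_cond_def)
    ultimately show ?thesis unfolding EC_def[symmetric] by simp
  next
    case G: True
    define B where "B = Bset N S t G"
    have BF: "B \<in> FS N S t" unfolding B_def by (rule Bset_FS[OF SN])
    have BS: "B \<in> sets ?M" using BF filt_sub[OF Pairs_on_sub[OF SN]] unfolding FS_def by blast
    have BO: "B \<inter> E \<inter> Opos N = EC \<inter> Opos N"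
    proof (intro set_eqI iffI)
      fix \<omega> assume \<omega>: "\<omega> \<in> B \<inter> E \<inter> Opos N"
      then have "\<omega> \<in> Opos N" by blast
      then have "\<forall>e\<in>Pairs N. 0 < \<omega> e" by (simp add: Opos_def)
      then have pos: "\<And>e. e \<in> Pairs_on S \<Longrightarrow> 0 < \<omega> e"
        using Pairs_on_sub[OF SN] by blast
      have "Rin S \<omega> t = G"
      proof -
        have "(\<omega> e \<le> t) = (e \<in> G)" if "e \<in> Pairs_on S" for e
        proof -
          have "\<omega> \<in> B" using \<omega> by blast
          then have "((if \<omega> e \<le> t then \<omega> e else 0) \<noteq> 0) = (e \<in> G)"
            using that unfolding B_def Bset_def by blast
          then show ?thesis using pos[OF that] by (auto split: if_splits)
        qed
        then show ?thesis using G unfolding Rin_def by blast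
      qed
      moreover have "\<omega> \<in> space ?M" "Ssol N a \<omega> t = S" "\<omega> \<in> Opos N" using \<omega> unfolding E_def by auto
      ultimately show "\<omega> \<in> EC \<inter> Opos N" unfolding ECR by blast
    next
      fix \<omega> assume \<omega>: "\<omega> \<in> EC \<inter> Opos N"
      then have "\<omega> \<in> Opos N" by blast
      then have "\<forall>e\<in>Pairs N. 0 < \<omega> e" by (simp add: Opos_def)
      then have pos: "\<And>e. e \<in> Pairs_on S \<Longrightarrow> 0 < \<omega> e"
        using Pairs_on_sub[OF SN] by blast
      have R: "Rin S \<omega> t = G" using \<omega> unfolding ECR by auto
      have "((if \<omega> e \<le> t then \<omega> e else 0) \<noteq> 0) = (e \<in> G)" if "e \<in> Pairs_on S" for e
      proof -
        have "(\<omega> e \<le> t) = (e \<in> G)" using R that unfolding Rin_def by blast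
        then show ?thesis using pos[OF that] by auto
      qed
      moreover have "\<omega> \<in> space ?M" "Ssol N a \<omega> t = S" "\<omega> \<in> Opos N" using \<omega> unfolding ECR by auto
      ultimately show "\<omega> \<in> B \<inter> E \<inter> Opos N" unfolding B_def Bset_def E_def by blast
    qed
    have m1: "measure ?M (X \<inter> B \<inter> E) = measure ?M (X \<inter> EC)"
    proof -
      have "measure ?M (X \<inter> B \<inter> E) = measure ?M (X \<inter> B \<inter> E \<inter> Opos N)"
        using measure_Opos[OF N, of "X \<inter> B \<inter> E"] X BS ES by simp
      also have "X \<inter> B \<inter> E \<inter> Opos N = X \<inter> EC \<inter> Opos N" using BO by blast
      also have "measure ?M \<dots> = measure ?M (X \<inter> EC)"
        using measure_Opos[OF N, of "X \<inter> EC"] X ECS by simp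
      finally show ?thesis .
    qed
    have m2: "measure ?M (B \<inter> E) = measure ?M EC"
    proof -
      have "measure ?M (B \<inter> E) = measure ?M (B \<inter> E \<inter> Opos N)"
        using measure_Opos[OF N, of "B \<inter> E"] BS ES by simp
      also have "\<dots> = measure ?M (EC \<inter> Opos N)" using BO by simp
      also have "\<dots> = measure ?M EC" using measure_Opos[OF N ECS] .
      finally show ?thesis .
    qed
    have dl: "measure ?M EC = ER_cond a S (pN N t) G * measure ?M E"
      unfolding ECR E_def by (rule DL[OF N SN t])
    have eq: "measure ?M (X \<inter> EC) * measure ?M E = measure ?M (X \<inter> E) * (ER_cond a S (pN N t) G * measure ?M E)"
      using ind[OF BF] m1 m2 dl unfolding E_def by simp
    show ?thesis
    proof (cases "measure ?M E = 0")
      case True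
      have "measure ?M (X \<inter> EC) \<le> measure ?M E" using ECE ES by (intro P.finite_measure_mono) auto
      moreover have "measure ?M (X \<inter> E) \<le> measure ?M E" using ES by (intro P.finite_measure_mono) auto
      ultimately have "measure ?M (X \<inter> EC) = 0" "measure ?M (X \<inter> E) = 0"
        using True measure_nonneg[of ?M "X \<inter> EC"] measure_nonneg[of ?M "X \<inter> E"] by linarith+
      then show ?thesis unfolding EC_def[symmetric] E_def[symmetric] by simp
    next
      case False
      then show ?thesis using eq unfolding EC_def[symmetric] E_def[symmetric] by simp
    qed
  qed
qed

lemma step0:
  fixes X :: "(nat \<times> nat \<Rightarrow> real) set"
  assumes N: "N > 0" and SN: "S \<subseteq> {..<N}" and X: "X \<in> sets (clock_space N)"
  shows "measure (clock_space N) (X \<inter> {\<omega>\<in>space (clock_space N). Ssol N a \<omega> 0 = S \<and> Csol N a \<omega> 0 = G})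
     = ER_cond a S (pN N 0) G * measure (clock_space N) (X \<inter> {\<omega>\<in>space (clock_space N). Ssol N a \<omega> 0 = S})"
proof -
  let ?M = "clock_space N"
  interpret P: prob_space ?M by (rule prob_clock[OF N])
  define S0 where "S0 = {v. v < N \<and> real (card (cluster {} v)) < a}"
  have onO: "Ssol N a \<omega> 0 = S0 \<and> Csol N a \<omega> 0 = {}" if "\<omega> \<in> Opos N" for \<omega>
  proof -
    have "links N a \<omega> 0 = {}"
      using that created_subset[of N a \<omega>] by (force simp: links_def Opos_def)
    then have S: "Ssol N a \<omega> 0 = S0" by (simp add: Ssol_def S0_def)
    have "Pairs_on S0 \<subseteq> Pairs N" by (rule Pairs_on_sub) (auto simp: S0_def)
    then have "Csol N a \<omega> 0 = {}" using that S by (force simp: Csol_def Opos_def)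
    with S show ?thesis by simp
  qed
  define E where "E = {\<omega>\<in>space ?M. Ssol N a \<omega> 0 = S}"
  define EC where "EC = {\<omega>\<in>space ?M. Ssol N a \<omega> 0 = S \<and> Csol N a \<omega> 0 = G}"
  have ES: "E \<in> sets ?M" unfolding E_def by (rule sets_Ssol)
  have ECS: "EC \<in> sets ?M" unfolding EC_def by (rule sets_Ssol)
  have OS: "Opos N \<subseteq> space ?M" by (auto simp: Opos_def)
  have mO: "measure ?M (Opos N) = 1" using measure_Opos[OF N sets.top] P.prob_space OS
    by (simp add: Int_absorb1)
  have ECO: "EC \<inter> Opos N = (if S0 = S \<and> G = {} then Opos N else {})"
    using onO OS unfolding EC_def by auto
  have EO: "E \<inter> Opos N = (if S0 = S then Opos N else {})"
    using onO OS unfolding E_def by auto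
  have "measure ?M EC = measure ?M (EC \<inter> Opos N)" using measure_Opos[OF N ECS] by simp
  also have "\<dots> = (if S0 = S \<and> G = {} then 1 else 0)" using ECO mO by simp
  finally have a1: "measure ?M EC = (if S0 = S \<and> G = {} then 1 else 0)" .
  have "measure ?M E = measure ?M (E \<inter> Opos N)" using measure_Opos[OF N ES] by simp
  also have "\<dots> = (if S0 = S then 1 else 0)" using EO mO by simp
  finally have a2: "measure ?M E = (if S0 = S then 1 else 0)" .
  have dl: "measure ?M EC = ER_cond a S (pN N 0) G * measure ?M E"
  proof -
    have "EC = {\<omega>\<in>space ?M. Ssol N a \<omega> 0 = S \<and> Rin S \<omega> 0 = G}"
      unfolding EC_def using Csol_Rin by blast
    then show ?thesis unfolding E_def using DL[OF N SN order_refl] by simp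
  qed
  have b1: "measure ?M (X \<inter> EC) = (if S0 = S \<and> G = {} then measure ?M X else 0)"
  proof -
    have "measure ?M (X \<inter> EC) = measure ?M (X \<inter> EC \<inter> Opos N)"
      using measure_Opos[OF N, of "X \<inter> EC"] X ECS by simp
    also have "X \<inter> EC \<inter> Opos N = (if S0 = S \<and> G = {} then X \<inter> Opos N else {})"
      using ECO by (cases "S0 = S \<and> G = {}") (auto simp: Int_assoc)
    also have "measure ?M \<dots> = (if S0 = S \<and> G = {} then measure ?M X else 0)"
      using measure_Opos[OF N X] by simp
    finally show ?thesis .
  qed
  have b2: "measure ?M (X \<inter> E) = (if S0 = S then measure ?M X else 0)"
  proof -
    have "measure ?M (X \<inter> E) = measure ?M (X \<inter> E \<inter> Opos N)"
      using measure_Opos[OF N, of "X \<inter> E"] X ES by simp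
    also have "X \<inter> E \<inter> Opos N = (if S0 = S then X \<inter> Opos N else {})"
      using EO by (cases "S0 = S") (auto simp: Int_assoc)
    also have "measure ?M \<dots> = (if S0 = S then measure ?M X else 0)"
      using measure_Opos[OF N X] by simp
    finally show ?thesis .
  qed
  show ?thesis
    using a1 a2 dl b1 b2 unfolding EC_def[symmetric] E_def[symmetric]
    by (cases "S0 = S"; cases "G = {}") auto
qed

lemma right_const:
  "\<exists>\<delta>>0. \<forall>s. r \<le> s \<and> s < r + \<delta> \<longrightarrow> pat N s \<omega> = pat N r \<omega>"
proof -
  define D where "D = (\<lambda>e. \<omega> e - r) ` {e\<in>Pairs N. r < \<omega> e}"
  have finD: "finite D" unfolding D_def using finite_Pairs by simp
  define \<delta> where "\<delta> = (if D = {} then 1 else Min D)"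
  have pos: "\<delta> > 0"
    using finD by (auto simp: \<delta>_def D_def)
  have le: "\<delta> \<le> \<omega> e - r" if "e \<in> Pairs N" "r < \<omega> e" for e
  proof -
    have "\<omega> e - r \<in> D" using that by (auto simp: D_def)
    then show ?thesis using finD by (auto simp: \<delta>_def)
  qed
  have "pat N s \<omega> = pat N r \<omega>" if "r \<le> s" "s < r + \<delta>" for s
  proof -
    have "(\<omega> e \<le> s) = (\<omega> e \<le> r)" if "e \<in> Pairs N" for e
      using le[OF that] \<open>r \<le> s\<close> \<open>s < r + \<delta>\<close> by (cases "r < \<omega> e") auto
    then show ?thesis unfolding pat_def by auto
  qed
  then show ?thesis using pos by blast
qed

definition dy :: "nat \<Rightarrow> real \<Rightarrow> real" where
  "dy n x = real (nat \<lceil>x * 2 ^ n\<rceil>) / 2 ^ n"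

lemma dy_ge: "0 \<le> x \<Longrightarrow> x \<le> dy n x"
proof -
  assume x: "0 \<le> x"
  have "0 \<le> x * 2 ^ n" using x by simp
  then have c: "0 \<le> \<lceil>x * 2 ^ n\<rceil>" by linarith
  have "x * 2 ^ n \<le> real_of_int \<lceil>x * 2 ^ n\<rceil>" by (rule le_of_int_ceiling)
  also have "\<dots> = real (nat \<lceil>x * 2 ^ n\<rceil>)" using c by simp
  finally have "x * 2 ^ n \<le> real (nat \<lceil>x * 2 ^ n\<rceil>)" .
  then show ?thesis by (simp add: dy_def field_simps)
qed

lemma dy_lt: "0 \<le> x \<Longrightarrow> dy n x < x + 1 / 2 ^ n"
proof -
  assume x: "0 \<le> x"
  have "real (nat \<lceil>x * 2 ^ n\<rceil>) = real_of_int \<lceil>x * 2 ^ n\<rceil>" using x by simp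
  also have "\<dots> < x * 2 ^ n + 1" by linarith
  finally show ?thesis by (simp add: dy_def field_simps)
qed

lemma dy_eq:
  assumes "real k / 2 ^ n < x" "x \<le> real (Suc k) / 2 ^ n"
  shows "dy n x = real (Suc k) / 2 ^ n"
proof -
  have "real k < x * 2 ^ n" "x * 2 ^ n \<le> real (Suc k)" using assms by (simp_all add: field_simps)
  then have "\<lceil>x * 2 ^ n\<rceil> = int (Suc k)" by (intro ceiling_unique) auto
  then show ?thesis by (simp add: dy_def)
qed

lemma dy_0[simp]: "dy n 0 = 0"
  by (simp add: dy_def)

lemma dy_nonneg: "0 \<le> x \<Longrightarrow> 0 \<le> dy n x"
  using dy_ge[of x n] by linarith

lemma dy_lim: assumes "0 \<le> x" shows "(\<lambda>n. dy n x) \<longlonglongrightarrow> x"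
proof -
  have "(\<lambda>n. x + (1/2) ^ n) \<longlonglongrightarrow> x + 0"
    by (intro tendsto_intros) simp
  then have up: "(\<lambda>n. x + 1 / 2 ^ n) \<longlonglongrightarrow> x" by (simp add: power_one_over)
  show ?thesis
    by (rule real_tendsto_sandwich[OF _ _ tendsto_const up])
       (use dy_ge[OF assms] dy_lt[OF assms] in \<open>auto intro!: always_eventually less_imp_le\<close>)
qed

lemma dy_eventually: assumes "0 \<le> x" "\<delta> > 0" shows "eventually (\<lambda>n. dy n x < x + \<delta>) sequentially"
proof -
  have "eventually (\<lambda>n. dy n x < x + \<delta>) sequentially"
    using dy_lim[OF assms(1)] assms(2) by (intro order_tendstoD) auto
  then show ?thesis .
qed

lemma ER_bounds:
  assumes "finite S" "0 \<le> p" "p \<le> 1"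
  shows "0 \<le> ER_cond a S p G" "ER_cond a S p G \<le> 1"
proof -
  define I where "I = {H. H \<subseteq> Pairs_on S \<and> no_big a S H}"
  have finI: "finite I" unfolding I_def
    by (rule finite_subset[of _ "Pow (Pairs_on S)"]) (auto simp: finite_Pairs_on[OF assms(1)])
  have wnn: "0 \<le> er_weight S p H" for H using assms by (simp add: er_weight_nonneg)
  have "0 \<le> ER_cond a S p G \<and> ER_cond a S p G \<le> 1"
  proof (cases "G \<in> I")
    case True
    have le: "er_weight S p G \<le> sum (er_weight S p) I"
      using True finI wnn by (intro member_le_sum) auto
    have "ER_cond a S p G = er_weight S p G / sum (er_weight S p) I"
      using True by (simp add: ER_cond_def I_def)
    then show ?thesis using le wnn[of G]
      by (cases "sum (er_weight S p) I = 0") (auto simp: divide_le_eq_1)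
  next
    case False then show ?thesis unfolding ER_cond_def I_def by auto
  qed
  then show "0 \<le> ER_cond a S p G" "ER_cond a S p G \<le> 1" by auto
qed

lemma ER_cont:
  assumes S: "finite S" and lim: "f \<longlonglongrightarrow> p" and p: "p < 1" and p0: "0 \<le> p"
  shows "(\<lambda>n. ER_cond a S (f n) G) \<longlonglongrightarrow> ER_cond a S p G"
proof (cases "G \<subseteq> Pairs_on S \<and> no_big a S G")
  case False
  then have "\<And>q. ER_cond a S q G = 0" unfolding ER_cond_def by auto
  then show ?thesis by simp
next
  case True
  define I where "I = {H. H \<subseteq> Pairs_on S \<and> no_big a S H}"
  have finI: "finite I" unfolding I_def
    by (rule finite_subset[of _ "Pow (Pairs_on S)"]) (auto simp: finite_Pairs_on[OF S])
  have w: "(\<lambda>n. er_weight S (f n) H) \<longlonglongrightarrow> er_weight S p H" for H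
    unfolding er_weight_def by (intro tendsto_intros lim)
  have sm: "(\<lambda>n. sum (er_weight S (f n)) I) \<longlonglongrightarrow> sum (er_weight S p) I"
    by (intro tendsto_sum w)
  have emp: "{} \<in> I"
  proof -
    have fG: "finite G" using True finite_Pairs_on[OF S] finite_subset by blast
    have "real (card (cluster {} v)) < a" if "v \<in> S" for v
    proof -
      have "card (cluster {} v) \<le> card (cluster G v)" using fG by (intro card_cluster_mono) auto
      moreover have "real (card (cluster G v)) < a" using True that by (auto simp: no_big_def)
      ultimately show ?thesis by (meson of_nat_le_iff order_le_less_trans)
    qed
    then show ?thesis by (auto simp: I_def no_big_def)
  qed
  have "0 < er_weight S p {}" using p by (simp add: er_weight_def)
  moreover have "er_weight S p {} \<le> sum (er_weight S p) I"
  proof (rule member_le_sum[OF emp _ finI])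
    fix H assume "H \<in> I - {{}}"
    show "0 \<le> er_weight S p H" using p p0 by (simp add: er_weight_def)
  qed
  ultimately have "sum (er_weight S p) I \<noteq> 0" by linarith
  then have "(\<lambda>n. er_weight S (f n) G / sum (er_weight S (f n)) I) \<longlonglongrightarrow> er_weight S p G / sum (er_weight S p) I"
    by (intro tendsto_divide w sm)
  then show ?thesis using True by (simp add: ER_cond_def I_def)
qed

lemma GL:
  fixes U V :: "nat \<Rightarrow> 'a set" and c :: "nat \<Rightarrow> real"
  assumes fm: "finite_measure M" and U: "\<And>k. U k \<in> sets M" and V: "\<And>k. V k \<in> sets M"
    and UV: "\<And>k. U k \<subseteq> V k" and dV: "disjoint_family V"
    and eq: "\<And>k. measure M (U k) = c k * measure M (V k)" and c: "\<And>k. 0 \<le> c k"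
  shows "emeasure M (\<Union>k. U k) = (\<integral>\<^sup>+\<omega>. (\<Sum>k. ennreal (c k) * indicator (V k) \<omega>) \<partial>M)"
proof -
  interpret finite_measure M by (rule fm)
  have dU: "disjoint_family U" using dV UV by (rule disjoint_family_subset)
  have "emeasure M (\<Union>k. U k) = (\<Sum>k. emeasure M (U k))"
    using U dU by (intro suminf_emeasure[symmetric]) auto
  also have "\<dots> = (\<Sum>k. ennreal (c k) * emeasure M (V k))"
  proof (intro suminf_cong)
    fix k
    show "emeasure M (U k) = ennreal (c k) * emeasure M (V k)"
      using eq[of k] c[of k] by (simp add: emeasure_eq_measure ennreal_mult)
  qed
  also have "\<dots> = (\<Sum>k. \<integral>\<^sup>+\<omega>. ennreal (c k) * indicator (V k) \<omega> \<partial>M)"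
    using V by (simp add: nn_integral_cmult_indicator)
  also have "\<dots> = (\<integral>\<^sup>+\<omega>. (\<Sum>k. ennreal (c k) * indicator (V k) \<omega>) \<partial>M)"
    using V by (intro nn_integral_suminf[symmetric]) auto
  finally show ?thesis .
qed

lemma tau_meas:
  assumes "gelation_stopping_time N a \<tau>"
  shows "\<tau> \<in> borel_measurable (clock_space N)"
proof (rule borel_measurableI_le)
  fix y :: ennreal
  show "{x \<in> space (clock_space N). \<tau> x \<le> y} \<in> sets (clock_space N)"
  proof (cases y)
    case (real r)
    then have "{x \<in> space (clock_space N). \<tau> x \<le> y} \<in> F N r"
      using assms by (simp add: gelation_stopping_time_def)
    then show ?thesis using filt_sub[of "Pairs N" N r] unfolding F_def by blast
  next
    case top then show ?thesis by simp
  qed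
qed

lemma dy_char_Suc:
  assumes r: "0 \<le> r"
  shows "dy n r = real (Suc j) / 2 ^ n \<longleftrightarrow> real j / 2 ^ n < r \<and> r \<le> real (Suc j) / 2 ^ n"
proof
  assume d: "dy n r = real (Suc j) / 2 ^ n"
  have "r \<le> dy n r" by (rule dy_ge[OF r])
  moreover have "dy n r < r + 1 / 2 ^ n" by (rule dy_lt[OF r])
  ultimately show "real j / 2 ^ n < r \<and> r \<le> real (Suc j) / 2 ^ n"
    using d by (simp add: field_simps)
next
  assume "real j / 2 ^ n < r \<and> r \<le> real (Suc j) / 2 ^ n"
  then show "dy n r = real (Suc j) / 2 ^ n" using dy_eq by blast
qed

lemma dy0_iff: "0 \<le> r \<Longrightarrow> dy n r = 0 \<longleftrightarrow> r = 0"
  using dy_ge[of r n] by auto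

lemma dy_nat: "dy n r = real (nat \<lceil>r * 2 ^ n\<rceil>) / 2 ^ n"
  by (simp add: dy_def)

lemma tk_inj: "real k / 2 ^ n = real k' / (2::real) ^ n \<Longrightarrow> k = k'"
  by (simp add: divide_cancel_right)

lemma dy_tk: assumes "0 \<le> r" shows " dy n r = real k / 2 ^ n \<longleftrightarrow>
   (case k of 0 \<Rightarrow> r = 0 | Suc j \<Rightarrow> real j / 2 ^ n < r \<and> r \<le> real (Suc j) / 2 ^ n)"
proof (cases k)
  case 0 then show ?thesis using dy0_iff[OF assms] by simp
next
  case (Suc j) then show ?thesis using dy_char_Suc[OF assms, of n j] by (simp del: of_nat_Suc)
qed

theorem lemma4p3:
  fixes \<alpha> :: "nat \<Rightarrow> real" and N :: nat and \<tau> :: "(nat \<times> nat \<Rightarrow> real) \<Rightarrow> ennreal"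
  assumes "filterlim \<alpha> at_top sequentially"
    and "(\<lambda>n. \<alpha> n / real n) \<longlonglongrightarrow> 0"
    and "N \<ge> 2"
    and "gelation_stopping_time N (\<alpha> N) \<tau>"
  shows "\<forall>T \<in> sets borel. \<forall>S. S \<subseteq> {..<N} \<longrightarrow> (\<forall>G.
     measure (clock_space N) {\<omega> \<in> space (clock_space N). \<tau> \<omega> < \<infinity> \<and> enn2real (\<tau> \<omega>) \<in> T
        \<and> Ssol N (\<alpha> N) \<omega> (enn2real (\<tau> \<omega>)) = S \<and> Csol N (\<alpha> N) \<omega> (enn2real (\<tau> \<omega>)) = G}
   = (\<integral>\<omega>. indicator {\<omega>. \<tau> \<omega> < \<infinity> \<and> enn2real (\<tau> \<omega>) \<in> T
            \<and> Ssol N (\<alpha> N) \<omega> (enn2real (\<tau> \<omega>)) = S} \<omega>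
          * ER_cond (\<alpha> N) S (pN N (enn2real (\<tau> \<omega>))) G \<partial>clock_space N))"
proof (intro ballI allI impI)
  fix T :: "real set" and S :: "nat set" and G :: "(nat \<times> nat) set"
  assume T[measurable]: "T \<in> sets borel" and SN: "S \<subseteq> {..<N}"
  have N: "N > 0" using assms(3) by simp
  define M where "M = clock_space N"
  define a where "a = \<alpha> N"
  interpret P: prob_space M unfolding M_def by (rule prob_clock[OF N])
  have gel: "gelation_stopping_time N a \<tau>" using assms(4) by (simp add: a_def)
  have tm[measurable]: "\<tau> \<in> borel_measurable M" unfolding M_def by (rule tau_meas[OF gel])
  define rr where "rr \<omega> = enn2real (\<tau> \<omega>)" for \<omega>
  have rrm[measurable]: "rr \<in> borel_measurable M" unfolding rr_def by measurable
  have rr0: "0 \<le> rr \<omega>" for \<omega> by (simp add: rr_def)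
  have finS: "finite S" using SN finite_subset by blast
  define Fin where "Fin = {\<omega>\<in>space M. \<tau> \<omega> < \<infinity> \<and> rr \<omega> \<in> T}"
  have FinS: "Fin \<in> sets M" unfolding Fin_def by measurable
  define tk where "tk n k = real k / 2 ^ n" for n k :: nat
  have tk0: "0 \<le> tk n k" for n k by (simp add: tk_def)
  define Xs where "Xs n k = {\<omega>\<in>Fin. case k of 0 \<Rightarrow> rr \<omega> = 0
       | Suc j \<Rightarrow> tk n j < rr \<omega> \<and> rr \<omega> \<le> tk n (Suc j)}" for n k
  have Xs_dy: "\<omega> \<in> Xs n k \<longleftrightarrow> \<omega> \<in> Fin \<and> dy n (rr \<omega>) = tk n k" for \<omega> n k
    unfolding Xs_def tk_def using dy_tk[OF rr0[of \<omega>], of n k] by auto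
  have XsS: "Xs n k \<in> sets M" for n k
  proof (cases k)
    case 0 then show ?thesis unfolding Xs_def using FinS by measurable
  next
    case (Suc j) then show ?thesis unfolding Xs_def using FinS by measurable
  qed
  define E where "E t = {\<omega>\<in>space M. Ssol N a \<omega> t = S}" for t
  define EC where "EC t = {\<omega>\<in>space M. Ssol N a \<omega> t = S \<and> Csol N a \<omega> t = G}" for t
  have ES: "E t \<in> sets M" for t unfolding E_def M_def by (rule sets_Ssol)
  have ECS: "EC t \<in> sets M" for t unfolding EC_def M_def by (rule sets_Ssol)
  define c where "c n k = ER_cond a S (pN N (tk n k)) G" for n k
  have c0: "0 \<le> c n k" for n k
    unfolding c_def using ER_bounds[OF finS] pN_bounds[OF tk0] by blast
  have step: "measure M (Xs n k \<inter> EC (tk n k)) = c n k * measure M (Xs n k \<inter> E (tk n k))" for n k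
  proof (cases k)
    case 0
    then have "tk n k = 0" by (simp add: tk_def)
    then show ?thesis unfolding c_def EC_def E_def M_def
      using step0[OF N SN XsS[unfolded M_def, of n k]] by simp
  next
    case (Suc j)
    let ?t = "tk n (Suc j)"
    define A where "A = {x::ennreal. ennreal (tk n j) < x \<and> x < top \<and> enn2real x \<in> T}"
    have "Measurable.pred borel (\<lambda>x::ennreal. ennreal (tk n j) < x \<and> x < top \<and> enn2real x \<in> T)"
      by measurable
    then have "{x\<in>space borel. ennreal (tk n j) < x \<and> x < top \<and> enn2real x \<in> T} \<in> sets borel"
      by (simp only: pred_def)
    moreover have "{x\<in>space borel. ennreal (tk n j) < x \<and> x < top \<and> enn2real x \<in> T} = A"
      unfolding A_def by auto
    ultimately have AS: "A \<in> sets borel" by (simp only:)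
    have Xg: "{\<omega>\<in>space M. (if \<tau> \<omega> \<le> ennreal ?t then \<tau> \<omega> else 0) \<in> A} = Xs n k"
    proof (intro set_eqI iffI)
      fix \<omega> assume \<omega>: "\<omega> \<in> {\<omega>\<in>space M. (if \<tau> \<omega> \<le> ennreal ?t then \<tau> \<omega> else 0) \<in> A}"
      then have sp: "\<omega> \<in> space M" by simp
      have le: "\<tau> \<omega> \<le> ennreal ?t"
      proof (rule ccontr)
        assume "\<not> ?thesis"
        then show False using \<omega> by (simp add: A_def)
      qed
      then have inA: "\<tau> \<omega> \<in> A" using \<omega> by simp
      then have fin: "\<tau> \<omega> < \<infinity>" by (simp add: A_def)
      then obtain r where r: "\<tau> \<omega> = ennreal r" "0 \<le> r" by (cases "\<tau> \<omega>") auto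
      have rr: "rr \<omega> = r" using r by (simp add: rr_def)
      have "tk n j < r" using inA r tk0[of n j] by (simp add: A_def ennreal_less_iff)
      moreover have "r \<le> ?t" using le r tk0[of n "Suc j"] by (simp add: ennreal_le_iff)
      moreover have "r \<in> T" using inA r by (simp add: A_def)
      ultimately show "\<omega> \<in> Xs n k" using sp fin rr Suc by (simp add: Xs_def Fin_def)
    next
      fix \<omega> assume \<omega>: "\<omega> \<in> Xs n k"
      then have sp: "\<omega> \<in> space M" and fin: "\<tau> \<omega> < \<infinity>" and T': "rr \<omega> \<in> T"
        and iv: "tk n j < rr \<omega>" "rr \<omega> \<le> ?t"
        using Suc by (auto simp: Xs_def Fin_def)
      obtain r where r: "\<tau> \<omega> = ennreal r" "0 \<le> r" using fin by (cases "\<tau> \<omega>") auto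
      have rr: "rr \<omega> = r" using r by (simp add: rr_def)
      have le: "\<tau> \<omega> \<le> ennreal ?t" using iv rr r by (simp add: ennreal_le_iff)
      have "\<tau> \<omega> \<in> A" using iv rr r T' tk0[of n j] by (simp add: A_def ennreal_less_iff)
      then show "\<omega> \<in> {\<omega>\<in>space M. (if \<tau> \<omega> \<le> ennreal ?t then \<tau> \<omega> else 0) \<in> A}"
        using sp le by simp
    qed
    have ind: "measure M (Xs n k \<inter> B \<inter> E ?t) * measure M (E ?t) =
        measure M (Xs n k \<inter> E ?t) * measure M (B \<inter> E ?t)" if B: "B \<in> FS N S ?t" for B
    proof -
      note G1 = gel[unfolded gelation_stopping_time_def, THEN conjunct2]
      note G2 = G1[rule_format, OF SN tk0[of n "Suc j"] AS B]
      show ?thesis using G2 unfolding Let_def E_def M_def by (simp only: Xg[unfolded M_def])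
    qed
    show ?thesis
      unfolding c_def EC_def E_def M_def
      using step1[OF N SN tk0 XsS[unfolded M_def, of n k] ind[unfolded E_def M_def]] Suc by simp
  qed
  define Ln where "Ln n = {\<omega>\<in>Fin. Ssol N a \<omega> (dy n (rr \<omega>)) = S \<and> Csol N a \<omega> (dy n (rr \<omega>)) = G}" for n
  define L where "L = {\<omega>\<in>Fin. Ssol N a \<omega> (rr \<omega>) = S \<and> Csol N a \<omega> (rr \<omega>) = G}"
  define V where "V n k = Xs n k \<inter> E (tk n k)" for n k
  define U where "U n k = Xs n k \<inter> EC (tk n k)" for n k
  define Rn where "Rn n \<omega> = indicator {\<omega>. \<tau> \<omega> < \<infinity> \<and> rr \<omega> \<in> T \<and> Ssol N a \<omega> (dy n (rr \<omega>)) = S} \<omega>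
      * ER_cond a S (pN N (dy n (rr \<omega>))) G" for n \<omega>
  define R where "R \<omega> = indicator {\<omega>. \<tau> \<omega> < \<infinity> \<and> rr \<omega> \<in> T \<and> Ssol N a \<omega> (rr \<omega>) = S} \<omega>
      * ER_cond a S (pN N (rr \<omega>)) G" for \<omega>
  have FinSp: "Fin \<subseteq> space M" by (auto simp: Fin_def)
  have k0: "\<omega> \<in> Xs n k \<longleftrightarrow> k = nat \<lceil>rr \<omega> * 2 ^ n\<rceil>" if "\<omega> \<in> Fin" for \<omega> n k
  proof -
    have "\<omega> \<in> Xs n k \<longleftrightarrow> dy n (rr \<omega>) = tk n k" using Xs_dy that by blast
    also have "\<dots> \<longleftrightarrow> tk n (nat \<lceil>rr \<omega> * 2 ^ n\<rceil>) = tk n k" by (simp add: dy_nat tk_def)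
    also have "\<dots> \<longleftrightarrow> k = nat \<lceil>rr \<omega> * 2 ^ n\<rceil>" unfolding tk_def using tk_inj by metis
    finally show ?thesis .
  qed
  have dytk: "dy n (rr \<omega>) = tk n (nat \<lceil>rr \<omega> * 2 ^ n\<rceil>)" for n \<omega> by (simp add: dy_nat tk_def)
  have XsF: "Xs n k \<subseteq> Fin" for n k by (auto simp: Xs_def)
  have LnU: "Ln n = (\<Union>k. U n k)" for n
  proof (intro set_eqI iffI)
    fix \<omega> assume "\<omega> \<in> Ln n"
    then have \<omega>: "\<omega> \<in> Fin" "Ssol N a \<omega> (dy n (rr \<omega>)) = S" "Csol N a \<omega> (dy n (rr \<omega>)) = G"
      by (auto simp: Ln_def)
    have "\<omega> \<in> Xs n (nat \<lceil>rr \<omega> * 2 ^ n\<rceil>)" using k0[OF \<omega>(1)] by simp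
    moreover have "\<omega> \<in> EC (tk n (nat \<lceil>rr \<omega> * 2 ^ n\<rceil>))"
      using \<omega> FinSp dytk[of n \<omega>] unfolding EC_def by auto
    ultimately show "\<omega> \<in> (\<Union>k. U n k)" by (auto simp: U_def)
  next
    fix \<omega> assume "\<omega> \<in> (\<Union>k. U n k)"
    then obtain k where k: "\<omega> \<in> Xs n k" "\<omega> \<in> EC (tk n k)" by (auto simp: U_def)
    then have "\<omega> \<in> Fin" "dy n (rr \<omega>) = tk n k" using Xs_dy by blast+
    then show "\<omega> \<in> Ln n" using k(2) by (auto simp: Ln_def EC_def)
  qed
  have US: "U n k \<in> sets M" for n k unfolding U_def using XsS ECS by blast
  have VS: "V n k \<in> sets M" for n k unfolding V_def using XsS ES by blast
  have UV: "U n k \<subseteq> V n k" for n k unfolding U_def V_def EC_def E_def by blast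
  have dV: "disjoint_family (V n)" for n
    unfolding disjoint_family_on_def
  proof (intro ballI impI)
    fix k k' :: nat assume kk: "k \<noteq> k'"
    show "V n k \<inter> V n k' = {}"
    proof (rule ccontr)
      assume "V n k \<inter> V n k' \<noteq> {}"
      then obtain \<omega> where w: "\<omega> \<in> V n k" "\<omega> \<in> V n k'" by blast
      then have x: "\<omega> \<in> Xs n k" "\<omega> \<in> Xs n k'" unfolding V_def by simp_all
      then have F: "\<omega> \<in> Fin" using XsF by blast
      have "k = nat \<lceil>rr \<omega> * 2 ^ n\<rceil>" "k' = nat \<lceil>rr \<omega> * 2 ^ n\<rceil>"
        using k0[OF F, of n k] k0[OF F, of n k'] x by simp_all
      then show False using kk by simp
    qed
  qed
  have stepUV: "measure M (U n k) = c n k * measure M (V n k)" for n k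
    unfolding U_def V_def by (rule step)
  have fm: "finite_measure M" by (rule P.finite_measure_axioms)
  have GLn: "emeasure M (Ln n) = (\<integral>\<^sup>+\<omega>. (\<Sum>k. ennreal (c n k) * indicator (V n k) \<omega>) \<partial>M)" for n
    unfolding LnU by (rule GL[OF fm US VS UV dV stepUV c0])
  have pNb: "0 \<le> pN N (dy n (rr \<omega>)) \<and> pN N (dy n (rr \<omega>)) \<le> 1" for n \<omega>
    by (rule pN_bounds[OF dy_nonneg[OF rr0]])
  have Rn01: "0 \<le> Rn n \<omega> \<and> Rn n \<omega> \<le> 1" for n \<omega>
    using ER_bounds[OF finS, of "pN N (dy n (rr \<omega>))" a G] pNb[of n \<omega>]
    unfolding Rn_def by (auto simp: indicator_def)
  have sum_eq: "(\<Sum>k. ennreal (c n k) * indicator (V n k) \<omega>) = ennreal (Rn n \<omega>)"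
    if sp: "\<omega> \<in> space M" for n \<omega>
  proof (cases "\<omega> \<in> Fin")
    case True
    define k1 where "k1 = nat \<lceil>rr \<omega> * 2 ^ n\<rceil>"
    have z: "ennreal (c n k) * indicator (V n k) \<omega> = 0" if "k \<notin> {k1}" for k
      using that k0[OF True, of n k] unfolding k1_def V_def by auto
    define F where "F k = ennreal (c n k) * indicator (V n k) \<omega>" for k
    have "(\<Sum>k. ennreal (c n k) * indicator (V n k) \<omega>) = (\<Sum>k. F k)" by (simp add: F_def)
    also have "\<dots> = (\<Sum>k\<in>{k1}. F k)"
      by (rule suminf_finite) (use z in \<open>auto simp: F_def\<close>)
    also have "\<dots> = F k1" by simp
    also have "\<dots> = ennreal (c n k1) * indicator (V n k1) \<omega>" by (simp only: F_def)
    also have "\<dots> = ennreal (Rn n \<omega>)"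
    proof -
      have inX: "\<omega> \<in> Xs n k1" using k0[OF True] k1_def by simp
      have d: "dy n (rr \<omega>) = tk n k1" using dytk k1_def by simp
      have TT: "\<tau> \<omega> < \<infinity> \<and> rr \<omega> \<in> T" using True by (simp add: Fin_def)
      show ?thesis
        using inX d TT sp c0[of n k1]
        by (cases "Ssol N a \<omega> (tk n k1) = S") (auto simp: V_def E_def Rn_def c_def indicator_def)
    qed
    finally show ?thesis .
  next
    case False
    then have z: "\<And>k. indicator (V n k) \<omega> = (0::ennreal)" using XsF unfolding V_def by (auto simp: indicator_def)
    have "Rn n \<omega> = 0" using False sp unfolding Rn_def Fin_def by (auto simp: indicator_def)
    then show ?thesis using z by simp
  qed
  have Rnm: "Rn n \<in> borel_measurable M" for n
  proof -
    have [measurable]: "V n k \<in> sets M" for k by (rule VS)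
    have m1: "(\<lambda>\<omega>. ennreal (c n k) * indicator (V n k) \<omega>) \<in> borel_measurable M" for k
      by measurable
    have m2: "(\<lambda>\<omega>. \<Sum>k. ennreal (c n k) * indicator (V n k) \<omega>) \<in> borel_measurable M"
      by (rule borel_measurable_suminf_order[OF m1])
    have A: "(\<lambda>\<omega>. enn2real (\<Sum>k. ennreal (c n k) * indicator (V n k) \<omega>)) \<in> borel_measurable M"
      by (rule borel_measurable_enn2real[OF m2])
    have B: "enn2real (\<Sum>k. ennreal (c n k) * indicator (V n k) \<omega>) = Rn n \<omega>" if "\<omega> \<in> space M" for \<omega>
    proof -
      have "enn2real (\<Sum>k. ennreal (c n k) * indicator (V n k) \<omega>) = enn2real (ennreal (Rn n \<omega>))"
        by (simp only: sum_eq[OF that, of n])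
      also have "\<dots> = Rn n \<omega>" using Rn01[of n \<omega>] by simp
      finally show ?thesis .
    qed
    have C: "((\<lambda>\<omega>. enn2real (\<Sum>k. ennreal (c n k) * indicator (V n k) \<omega>)) \<in> borel_measurable M)
        = ((\<lambda>\<omega>. Rn n \<omega>) \<in> borel_measurable M)"
      by (rule measurable_cong) (rule B)
    show ?thesis using A C by simp
  qed
  have LnS: "Ln n \<in> sets M" for n unfolding LnU using US by blast
  have mLn: "measure M (Ln n) = integral\<^sup>L M (Rn n)" for n
  proof -
    have "measure M (Ln n) = enn2real (emeasure M (Ln n))" by (simp add: measure_def)
    also have "\<dots> = enn2real (\<integral>\<^sup>+\<omega>. ennreal (Rn n \<omega>) \<partial>M)"
      unfolding GLn by (intro arg_cong[where f=enn2real] nn_integral_cong) (simp add: sum_eq)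
    also have "\<dots> = integral\<^sup>L M (Rn n)"
      using Rn01 by (intro integral_eq_nn_integral[symmetric] Rnm) auto
    finally show ?thesis .
  qed
  have conv: "(\<lambda>n. indicator (Ln n) \<omega> :: real) \<longlonglongrightarrow> indicator L \<omega> \<and> (\<lambda>n. Rn n \<omega>) \<longlonglongrightarrow> R \<omega>"
    if sp: "\<omega> \<in> space M" for \<omega>
  proof (cases "\<omega> \<in> Fin")
    case True
    define r where "r = rr \<omega>"
    have r0: "0 \<le> r" unfolding r_def by (rule rr0)
    obtain \<delta> where \<delta>: "\<delta> > 0" "\<forall>s. r \<le> s \<and> s < r + \<delta> \<longrightarrow> pat N s \<omega> = pat N r \<omega>"
      using right_const[of r N \<omega>] by blast
    have ev: "eventually (\<lambda>n. Ssol N a \<omega> (dy n r) = Ssol N a \<omega> r \<and> Csol N a \<omega> (dy n r) = Csol N a \<omega> r) sequentially"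
      using dy_eventually[OF r0 \<delta>(1)]
    proof eventually_elim
      case (elim n)
      then have "pat N (dy n r) \<omega> = pat N r \<omega>" using \<delta>(2) dy_ge[OF r0, of n] by blast
      then show ?case using pat_sol by blast
    qed
    have c1: "(\<lambda>n. indicator (Ln n) \<omega> :: real) \<longlonglongrightarrow> indicator L \<omega>"
    proof (rule tendsto_eventually)
      show "eventually (\<lambda>n. indicator (Ln n) \<omega> = (indicator L \<omega> :: real)) sequentially"
        using ev by eventually_elim (use True in \<open>simp add: Ln_def L_def r_def indicator_def\<close>)
    qed
    have pl: "(\<lambda>n. pN N (dy n r)) \<longlonglongrightarrow> pN N r"
      unfolding pN_def using N by (intro tendsto_intros dy_lim[OF r0]) auto
    have p1: "pN N r < 1" by (simp add: pN_def)
    have p0: "0 \<le> pN N r" using pN_bounds[OF r0] by simp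
    have el: "(\<lambda>n. ER_cond a S (pN N (dy n r)) G) \<longlonglongrightarrow> ER_cond a S (pN N r) G"
      by (rule ER_cont[OF finS pl p1 p0])
    define I0 where "I0 = (indicator {\<omega>. \<tau> \<omega> < \<infinity> \<and> rr \<omega> \<in> T \<and> Ssol N a \<omega> (rr \<omega>) = S} \<omega> :: real)"
    have "(\<lambda>n. I0 * ER_cond a S (pN N (dy n r)) G) \<longlonglongrightarrow> I0 * ER_cond a S (pN N r) G"
      by (intro tendsto_mult tendsto_const el)
    moreover have "eventually (\<lambda>n. I0 * ER_cond a S (pN N (dy n r)) G = Rn n \<omega>) sequentially"
      using ev by eventually_elim (simp add: Rn_def I0_def r_def indicator_def)
    ultimately have "(\<lambda>n. Rn n \<omega>) \<longlonglongrightarrow> I0 * ER_cond a S (pN N r) G"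
      by (rule Lim_transform_eventually)
    moreover have "R \<omega> = I0 * ER_cond a S (pN N r) G" by (simp add: R_def I0_def r_def)
    ultimately have c2: "(\<lambda>n. Rn n \<omega>) \<longlonglongrightarrow> R \<omega>" by simp
    show ?thesis using c1 c2 by blast
  next
    case False
    have "indicator (Ln n) \<omega> = (0::real)" for n using False by (simp add: Ln_def indicator_def)
    moreover have "indicator L \<omega> = (0::real)" using False by (simp add: L_def indicator_def)
    moreover have "Rn n \<omega> = 0" for n using False sp unfolding Rn_def Fin_def by (auto simp: indicator_def)
    moreover have "R \<omega> = 0" using False sp unfolding R_def Fin_def by (auto simp: indicator_def)
    ultimately show ?thesis by simp
  qed
  have Lnm: "(indicator (Ln n) :: _ \<Rightarrow> real) \<in> borel_measurable M" for n
    using LnS by (intro borel_measurable_indicator)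
  have Lm: "(indicator L :: _ \<Rightarrow> real) \<in> borel_measurable M"
    by (rule borel_measurable_LIMSEQ_real[of M "\<lambda>n. indicator (Ln n)" "indicator L", OF _ Lnm])
       (use conv in blast)
  have Rm: "R \<in> borel_measurable M"
    by (rule borel_measurable_LIMSEQ_real[of M Rn R, OF _ Rnm]) (use conv in blast)
  have int1: "integrable M (\<lambda>_. 1::real)" by simp
  have lim1: "(\<lambda>n. integral\<^sup>L M (indicator (Ln n) :: _ \<Rightarrow> real)) \<longlonglongrightarrow> integral\<^sup>L M (indicator L)"
  proof (rule integral_dominated_convergence[OF Lm Lnm int1])
    show "AE x in M. (\<lambda>n. indicator (Ln n) x :: real) \<longlonglongrightarrow> indicator L x"
      using conv by (intro AE_I2) blast
    show "AE x in M. norm (indicator (Ln n) x :: real) \<le> 1" for n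
      by (intro AE_I2) (simp add: indicator_def)
  qed
  have lim2: "(\<lambda>n. integral\<^sup>L M (Rn n)) \<longlonglongrightarrow> integral\<^sup>L M R"
  proof (rule integral_dominated_convergence[OF Rm Rnm int1])
    show "AE x in M. (\<lambda>n. Rn n x) \<longlonglongrightarrow> R x"
      using conv by (intro AE_I2) blast
    show "AE x in M. norm (Rn n x) \<le> 1" for n
      using Rn01 by (intro AE_I2) auto
  qed
  have LSp: "L \<subseteq> space M" "Ln n \<subseteq> space M" for n using FinSp by (auto simp: L_def Ln_def)
  have "(\<lambda>n. measure M (Ln n)) \<longlonglongrightarrow> measure M L"
    using lim1 LSp by (simp add: Int_absorb2)
  moreover have "(\<lambda>n. measure M (Ln n)) \<longlonglongrightarrow> integral\<^sup>L M R"
    using lim2 mLn by simp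
  ultimately have final: "measure M L = integral\<^sup>L M R" by (rule LIMSEQ_unique)
  have eqL: "{\<omega> \<in> space (clock_space N). \<tau> \<omega> < \<infinity> \<and> enn2real (\<tau> \<omega>) \<in> T
        \<and> Ssol N (\<alpha> N) \<omega> (enn2real (\<tau> \<omega>)) = S \<and> Csol N (\<alpha> N) \<omega> (enn2real (\<tau> \<omega>)) = G} = L"
    by (auto simp: L_def Fin_def rr_def M_def a_def)
  have eqR: "(\<lambda>\<omega>. indicator {\<omega>. \<tau> \<omega> < \<infinity> \<and> enn2real (\<tau> \<omega>) \<in> T
            \<and> Ssol N (\<alpha> N) \<omega> (enn2real (\<tau> \<omega>)) = S} \<omega>
          * ER_cond (\<alpha> N) S (pN N (enn2real (\<tau> \<omega>))) G) = R"
    unfolding R_def rr_def a_def by simp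
  show "measure (clock_space N) {\<omega> \<in> space (clock_space N). \<tau> \<omega> < \<infinity> \<and> enn2real (\<tau> \<omega>) \<in> T
        \<and> Ssol N (\<alpha> N) \<omega> (enn2real (\<tau> \<omega>)) = S \<and> Csol N (\<alpha> N) \<omega> (enn2real (\<tau> \<omega>)) = G}
   = (\<integral>\<omega>. indicator {\<omega>. \<tau> \<omega> < \<infinity> \<and> enn2real (\<tau> \<omega>) \<in> T
            \<and> Ssol N (\<alpha> N) \<omega> (enn2real (\<tau> \<omega>)) = S} \<omega>
          * ER_cond (\<alpha> N) S (pN N (enn2real (\<tau> \<omega>))) G \<partial>clock_space N)"
    unfolding eqL eqR using final by (simp add: M_def)
qed

end
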